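(* In the setting below, let $(\hat\beta,\beta^\star)\in[0,\infty)^2$ with $\hat\beta<\beta^\star$. Then $\|\alpha\xi^*\|^2_{\mathbb H^2_{T,\hat\beta}}\le\frac{(1+\beta^\star\Phi)(1+\hat\beta\Phi)}{\beta^\star-\hat\beta}\,\mathbb E\Big[\sup_{s\in[0,\infty]}\mathcal E(\beta^\star A)_s(\xi^+_s)^2\mathbf 1_{\{s<T\}}\Big]$. In particular, if the right-hand side expectation is finite, so is $\|\alpha\xi^*\|_{\mathbb H^2_{T,\hat\beta}}$.
   Context: Setting. $(\Omega,\mathcal F,\mathbb P)$ is a probability space with a right-continuous filtration $\mathbb G$, $\mathcal G_\infty:=\sigma(\bigcup_t\mathcal G_t)$ whose universal completion is contained in $\mathcal F$; all notions refer to $\mathbb G$, $\mathbb P$. $T$ is a stopping time. $C$ is a predictable real-valued process with a.s. right-continuous non-decreasing paths and $C_0=0$; $\alpha$ is a nonnegative predictable process with $\alpha>0$ $\mathbb P\otimes dC$-a.e. on $\{t\le T\}$ such that $A_t:=\int_0^{t\wedge T}\alpha_s^2dC_s$ is real-valued and $\Delta A\le\Phi$ up to evanescence for a constant $\Phi\in[0,\infty)$. For $\beta\ge0$, $\mathcal E(\beta A)_t:=e^{\beta A_t}\prod_{0<s\le t}(1+\beta\Delta A_s)e^{-\beta\Delta A_s}$. $\xi=(\xi_t)_{t\in[0,\infty]}$ is an optional $[-\infty,\infty)$-valued process; $\xi^*_0:=0$ and $\xi^*_t:=\lim_{t'\uparrow\uparrow t}\sup_{s\in[t',\infty]}\xi^+_s\mathbf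 1_{\{s<T\}}$ for $t\in(0,\infty]$. For a process $\phi$, $\|\phi\|^2_{\mathbb H^2_{T,\beta}}:=\mathbb E\int_0^T\mathcal E(\beta A)_s|\phi_s|^2dC_s$ (integral over $(0,T]$), so that $\|\alpha\xi^*\|^2_{\mathbb H^2_{T,\beta}}=\mathbb E\int_0^T\mathcal E(\beta A)_s|\xi^*_s|^2dA_s$. *)

theory Defs
  imports "HOL-Probability.Probability"
begin

text \<open>Time index: [0,\<infinity>) is represented by nonnegative reals; the value \<infinity> of a
  stopping time is represented in ereal.  A filtration is G :: real \<Rightarrow> 'a measure.\<close>

definition filtration_on :: "'a measure \<Rightarrow> (real \<Rightarrow> 'a measure) \<Rightarrow> bool" where
  "filtration_on M G \<longleftrightarrow>
     (\<forall>t\<ge>0. space (G t) = space M \<and> sets (G t) \<subseteq> sets M) \<and>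
     (\<forall>s t. 0 \<le> s \<longrightarrow> s \<le> t \<longrightarrow> sets (G s) \<subseteq> sets (G t))"

definition right_continuous_filtration :: "(real \<Rightarrow> 'a measure) \<Rightarrow> bool" where
  "right_continuous_filtration G \<longleftrightarrow> (\<forall>t\<ge>0. sets (G t) = (\<Inter>u\<in>{t<..}. sets (G u)))"

definition G_infty :: "'a measure \<Rightarrow> (real \<Rightarrow> 'a measure) \<Rightarrow> 'a measure" where
  "G_infty M G = sigma (space M) (\<Union>t\<in>{0..}. sets (G t))"

definition universal_completion_sets :: "'a measure \<Rightarrow> 'a set set" where
  "universal_completion_sets N =
     (\<Inter>{sets (completion P) | P. sets P = sets N \<and> prob_space P})"

definition stopping_time_on :: "'a measure \<Rightarrow> (real \<Rightarrow> 'a measure) \<Rightarrow> ('a \<Rightarrow> ereal) \<Rightarrow> bool" where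
  "stopping_time_on M G T \<longleftrightarrow>
     (\<forall>\<omega>\<in>space M. 0 \<le> T \<omega>) \<and> (\<forall>t\<ge>0. {\<omega>\<in>space M. T \<omega> \<le> ereal t} \<in> sets (G t))"

definition predictable_sigma :: "'a measure \<Rightarrow> (real \<Rightarrow> 'a measure) \<Rightarrow> (real \<times> 'a) measure" where
  "predictable_sigma M G = sigma ({0..} \<times> space M)
     ({{0} \<times> B | B. B \<in> sets (G 0)} \<union>
      {{s<..t} \<times> B | s t B. 0 \<le> s \<and> s \<le> t \<and> B \<in> sets (G s)})"

definition optional_sigma :: "'a measure \<Rightarrow> (real \<Rightarrow> 'a measure) \<Rightarrow> (real \<times> 'a) measure" where
  "optional_sigma M G = sigma ({0..} \<times> space M)
     {{(t, \<omega>). 0 \<le> t \<and> \<omega> \<in> space M \<and> S \<omega> \<le> ereal t} | S. stopping_time_on M G S}"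

definition predictable :: "'a measure \<Rightarrow> (real \<Rightarrow> 'a measure) \<Rightarrow> (real \<Rightarrow> 'a \<Rightarrow> real) \<Rightarrow> bool" where
  "predictable M G X \<longleftrightarrow> (\<lambda>(t, \<omega>). X t \<omega>) \<in> measurable (predictable_sigma M G) borel"

definition optional_ereal :: "'a measure \<Rightarrow> (real \<Rightarrow> 'a measure) \<Rightarrow> (real \<Rightarrow> 'a \<Rightarrow> ereal) \<Rightarrow> bool" where
  "optional_ereal M G X \<longleftrightarrow> (\<lambda>(t, \<omega>). X t \<omega>) \<in> measurable (optional_sigma M G) borel"

text \<open>the path of C, extended by 0 to negative times (so dC has no mass on (-\<infinity>,0])\<close>
definition path :: "(real \<Rightarrow> 'a \<Rightarrow> real) \<Rightarrow> 'a \<Rightarrow> real \<Rightarrow> real" where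
  "path C \<omega> t = (if t < 0 then 0 else C t \<omega>)"

definition dC :: "(real \<Rightarrow> 'a \<Rightarrow> real) \<Rightarrow> 'a \<Rightarrow> real measure" where
  "dC C \<omega> = interval_measure (path C \<omega>)"

definition A_enn :: "(real \<Rightarrow> 'a \<Rightarrow> real) \<Rightarrow> (real \<Rightarrow> 'a \<Rightarrow> real) \<Rightarrow> ('a \<Rightarrow> ereal) \<Rightarrow> real \<Rightarrow> 'a \<Rightarrow> ennreal" where
  "A_enn C \<alpha> T t \<omega> =
     (\<integral>\<^sup>+ s. ennreal ((\<alpha> s \<omega>)\<^sup>2) * indicator {s. 0 < s \<and> s \<le> t \<and> ereal s \<le> T \<omega>} s \<partial>dC C \<omega>)"

definition A_proc :: "(real \<Rightarrow> 'a \<Rightarrow> real) \<Rightarrow> (real \<Rightarrow> 'a \<Rightarrow> real) \<Rightarrow> ('a \<Rightarrow> ereal) \<Rightarrow> real \<Rightarrow> 'a \<Rightarrow> real" where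
  "A_proc C \<alpha> T t \<omega> = enn2real (A_enn C \<alpha> T t \<omega>)"

text \<open>jump \<Delta>X_t = X_t - X_{t-} of a nondecreasing process (X_{0-} = X_0)\<close>
definition jump :: "(real \<Rightarrow> 'a \<Rightarrow> real) \<Rightarrow> real \<Rightarrow> 'a \<Rightarrow> real" where
  "jump X t \<omega> = (if t \<le> 0 then 0 else X t \<omega> - (SUP s\<in>{0..<t}. X s \<omega>))"

text \<open>Dol\'eans-Dade exponential of \<beta>A for nondecreasing A:
  e^{\<beta>A_t} \<Prod>_{0<s\<le>t} (1+\<beta>\<Delta>A_s) e^{-\<beta>\<Delta>A_s}; the (unordered) infinite product of factors
  in (0,1] is the infimum of its finite partial products.\<close>
definition stoch_exp :: "real \<Rightarrow> (real \<Rightarrow> 'a \<Rightarrow> real) \<Rightarrow> real \<Rightarrow> 'a \<Rightarrow> real" where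
  "stoch_exp \<beta> X t \<omega> = exp (\<beta> * X t \<omega>) *
     (INF F\<in>{F. finite F \<and> F \<subseteq> {0<..t}}.
        \<Prod>s\<in>F. (1 + \<beta> * jump X s \<omega>) * exp (- \<beta> * jump X s \<omega>))"

text \<open>\<xi>^+_s 1_{s<T} (the value at s = \<infinity> vanishes since never \<infinity> < T)\<close>
definition xi_pos_before :: "(real \<Rightarrow> 'a \<Rightarrow> ereal) \<Rightarrow> ('a \<Rightarrow> ereal) \<Rightarrow> real \<Rightarrow> 'a \<Rightarrow> ennreal" where
  "xi_pos_before \<xi> T s \<omega> = (if ereal s < T \<omega> then e2ennreal (\<xi> s \<omega>) else 0)"

text \<open>\<xi>^*_0 = 0, \<xi>^*_t = lim_{t' \<up>\<up> t} sup_{s\<in>[t',\<infinity>]} \<xi>^+_s 1_{s<T}; the sup is nonincreasing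
  in t', so the limit is the infimum over t' < t.\<close>
definition xi_star :: "(real \<Rightarrow> 'a \<Rightarrow> ereal) \<Rightarrow> ('a \<Rightarrow> ereal) \<Rightarrow> real \<Rightarrow> 'a \<Rightarrow> ennreal" where
  "xi_star \<xi> T t \<omega> = (if t \<le> 0 then 0 else
     (INF t'\<in>{0..<t}. SUP s\<in>{t'..}. xi_pos_before \<xi> T s \<omega>))"

definition H2_norm_sq :: "'a measure \<Rightarrow> (real \<Rightarrow> 'a \<Rightarrow> real) \<Rightarrow> ('a \<Rightarrow> ereal) \<Rightarrow> (real \<Rightarrow> 'a \<Rightarrow> real)
    \<Rightarrow> real \<Rightarrow> (real \<Rightarrow> 'a \<Rightarrow> ennreal) \<Rightarrow> ennreal" where
  "H2_norm_sq M C T A \<beta> \<phi> =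
     (\<integral>\<^sup>+ \<omega>. (\<integral>\<^sup>+ s. ennreal (stoch_exp \<beta> A s \<omega>) * (\<phi> s \<omega>)\<^sup>2
                  * indicator {s. 0 < s \<and> ereal s \<le> T \<omega>} s \<partial>dC C \<omega>) \<partial>M)"

end

theory Submission
  imports Defs
begin


definition jmp :: "(real \<Rightarrow> real) \<Rightarrow> real \<Rightarrow> real" where
  "jmp f s = (if s \<le> 0 then 0 else f s - (SUP u\<in>{0..<s}. f u))"

definition pf :: "real \<Rightarrow> (real \<Rightarrow> real) \<Rightarrow> real \<Rightarrow> real" where
  "pf \<beta> f s = (1 + \<beta> * jmp f s) * exp (- \<beta> * jmp f s)"

definition PP :: "real \<Rightarrow> (real \<Rightarrow> real) \<Rightarrow> real set \<Rightarrow> real" where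
  "PP \<beta> f I = (INF F\<in>{F. finite F \<and> F \<subseteq> I}. \<Prod>s\<in>F. pf \<beta> f s)"

definition EE :: "real \<Rightarrow> (real \<Rightarrow> real) \<Rightarrow> real \<Rightarrow> real" where
  "EE \<beta> f t = exp (\<beta> * f t) * PP \<beta> f {0<..t}"

lemma jump_jmp: "jump X s \<omega> = jmp (\<lambda>t. X t \<omega>) s"
  unfolding jump_def jmp_def by simp

lemma stoch_exp_EE: "stoch_exp \<beta> X t \<omega> = EE \<beta> (\<lambda>t. X t \<omega>) t"
  unfolding stoch_exp_def EE_def PP_def pf_def jump_jmp by simp

lemma jmp_sup_le:
  fixes f :: "real \<Rightarrow> real"
  assumes mono: "mono_on {0..} f" and s: "0 < s"
  shows "bdd_above (f ` {0..<s})" "(SUP u\<in>{0..<s}. f u) \<le> f s"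
    "\<And>u. u \<in> {0..<s} \<Longrightarrow> f u \<le> (SUP u\<in>{0..<s}. f u)"
proof -
  have b: "f u \<le> f s" if "u \<in> {0..<s}" for u
    by (rule mono_onD[OF mono]) (use that s in auto)
  show bd: "bdd_above (f ` {0..<s})" using b by (intro bdd_aboveI2)
  show "(SUP u\<in>{0..<s}. f u) \<le> f s" using s b by (intro cSUP_least) simp_all
  show "\<And>u. u \<in> {0..<s} \<Longrightarrow> f u \<le> (SUP u\<in>{0..<s}. f u)"
    using bd by (intro cSUP_upper)
qed

lemma jmp_nonneg:
  assumes mono: "mono_on {0..} f"
  shows "0 \<le> jmp f s"
  using jmp_sup_le(2)[OF mono, of s] unfolding jmp_def by auto

lemma jmp_le_diff:
  assumes mono: "mono_on {0..} f" and "0 \<le> t" "t < s"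
  shows "jmp f s \<le> f s - f t"
  using jmp_sup_le(3)[OF mono, of s t] assms unfolding jmp_def by auto

lemma sum_jmp_le:
  assumes mono: "mono_on {0..} f"
  shows "finite F \<Longrightarrow> F \<subseteq> {a<..b} \<Longrightarrow> 0 \<le> a \<Longrightarrow> a \<le> b \<Longrightarrow>
    (\<Sum>s\<in>F. jmp f s) \<le> f b - f a"
proof (induction "card F" arbitrary: F b rule: less_induct)
  case less
  show ?case
  proof (cases "F = {}")
    case True
    then show ?thesis using mono_onD[OF mono, of a b] less.prems by simp
  next
    case False
    define m where "m = Max F"
    have mF: "m \<in> F" using False less.prems m_def by auto
    have mab: "a < m" "m \<le> b" using mF less.prems by auto
    define F' where "F' = F - {m}"
    define t where "t = (if F' = {} then a else Max F')"
    have fin': "finite F'" using less.prems F'_def by auto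
    have F't: "F' \<subseteq> {a<..t}"
    proof
      fix x assume x: "x \<in> F'"
      then have "x \<le> Max F'" using fin' by auto
      moreover have "a < x" using x F'_def less.prems by auto
      ultimately show "x \<in> {a<..t}" using x t_def by auto
    qed
    have ta: "a \<le> t" "t < m"
    proof -
      show "a \<le> t"
      proof (cases "F' = {}")
        case False
        then have "Max F' \<in> F'" using fin' by auto
        then show ?thesis using False t_def F'_def less.prems by auto
      qed (simp add: t_def)
      show "t < m"
      proof (cases "F' = {}")
        case True then show ?thesis using t_def mab by auto
      next
        case False
        have "Max F' \<in> F'" using False fin' by auto
        moreover have "Max F' \<le> m" using \<open>Max F' \<in> F'\<close> m_def less.prems F'_def by auto
        ultimately show ?thesis using t_def False F'_def by (metis DiffE insertI1 less_le)
      qed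
    qed
    have "card F' < card F" using F'_def mF less.prems(1) by (metis card_Diff1_less)
    then have IH: "(\<Sum>s\<in>F'. jmp f s) \<le> f t - f a"
      using less.hyps fin' F't ta less.prems by auto
    have Fins: "F = insert m F'" using F'_def mF by auto
    have "(\<Sum>s\<in>F. jmp f s) = jmp f m + (\<Sum>s\<in>F'. jmp f s)"
      unfolding F'_def using sum.remove[OF less.prems(1) mF] .
    also have "\<dots> \<le> (f m - f t) + (f t - f a)"
      using jmp_le_diff[OF mono, of t m] ta less.prems IH by auto
    also have "\<dots> \<le> f b - f a" using mono_onD[OF mono, of m b] mab less.prems by auto
    finally show ?thesis .
  qed
qed


lemma pf_bounds:
  fixes f :: "real \<Rightarrow> real"
  assumes mono: "mono_on {0..} f" and b: "0 \<le> \<beta>"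
  shows "0 < pf \<beta> f s" "pf \<beta> f s \<le> 1" "exp (- \<beta> * jmp f s) \<le> pf \<beta> f s"
proof -
  have j: "0 \<le> jmp f s" by (rule jmp_nonneg[OF mono])
  then have x: "0 \<le> \<beta> * jmp f s" using b by simp
  show "0 < pf \<beta> f s" unfolding pf_def using x by (intro mult_pos_pos) auto
  have "1 + \<beta> * jmp f s \<le> exp (\<beta> * jmp f s)" by (rule exp_ge_add_one_self)
  then have "(1 + \<beta> * jmp f s) * exp (- \<beta> * jmp f s) \<le> exp (\<beta> * jmp f s) * exp (- \<beta> * jmp f s)"
    by (intro mult_right_mono) auto
  also have "\<dots> = 1" by (simp add: exp_minus field_simps)
  finally show "pf \<beta> f s \<le> 1" unfolding pf_def .
  show "exp (- \<beta> * jmp f s) \<le> pf \<beta> f s" unfolding pf_def using x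
    by (simp add: mult_le_cancel_right1)
qed

lemma PP_bdd:
  fixes f :: "real \<Rightarrow> real"
  assumes mono: "mono_on {0..} f" and b: "0 \<le> \<beta>"
  shows "bdd_below ((\<lambda>F. \<Prod>s\<in>F. pf \<beta> f s) ` {F. finite F \<and> F \<subseteq> I})"
  using pf_bounds(1)[OF mono b] by (intro bdd_belowI2[where m=0] prod_nonneg) (auto intro: less_imp_le)

lemma PP_le_prod:
  fixes f :: "real \<Rightarrow> real"
  assumes mono: "mono_on {0..} f" and b: "0 \<le> \<beta>" and F: "finite F" "F \<subseteq> I"
  shows "PP \<beta> f I \<le> (\<Prod>s\<in>F. pf \<beta> f s)"
  unfolding PP_def using F by (intro cINF_lower[OF PP_bdd[OF mono b]]) auto

lemma PP_nonneg:
  fixes f :: "real \<Rightarrow> real"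
  assumes mono: "mono_on {0..} f" and b: "0 \<le> \<beta>"
  shows "0 \<le> PP \<beta> f I"
  unfolding PP_def using pf_bounds(1)[OF mono b]
  by (intro cINF_greatest prod_nonneg) (auto intro: less_imp_le)

lemma PP_ge:
  fixes f :: "real \<Rightarrow> real"
  assumes mono: "mono_on {0..} f" and b: "0 \<le> \<beta>" and I: "I \<subseteq> {a<..b}" and ab: "0 \<le> a" "a \<le> b"
  shows "exp (- \<beta> * (f b - f a)) \<le> PP \<beta> f I"
  unfolding PP_def
proof (rule cINF_greatest)
  show "{F. finite F \<and> F \<subseteq> I} \<noteq> {}" by auto
  fix F assume F: "F \<in> {F. finite F \<and> F \<subseteq> I}"
  have "exp (- \<beta> * (f b - f a)) \<le> exp (- \<beta> * (\<Sum>s\<in>F. jmp f s))"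
    using sum_jmp_le[OF mono, of F a b] F I ab b by (auto intro: mult_left_mono)
  also have "\<dots> = (\<Prod>s\<in>F. exp (- \<beta> * jmp f s))"
    using F by (simp add: exp_sum sum_distrib_left)
  also have "\<dots> \<le> (\<Prod>s\<in>F. pf \<beta> f s)"
    using pf_bounds(3)[OF mono b] by (intro prod_mono) auto
  finally show "exp (- \<beta> * (f b - f a)) \<le> (\<Prod>s\<in>F. pf \<beta> f s)" .
qed

lemma PP_empty: "PP \<beta> f {} = 1"
proof -
  have "{F. finite F \<and> F \<subseteq> ({}::real set)} = {{}}" by auto
  then show ?thesis unfolding PP_def by simp
qed

lemma PP_union:
  fixes f :: "real \<Rightarrow> real"
  assumes mono: "mono_on {0..} f" and b: "0 \<le> \<beta>" and disj: "I \<inter> J = {}"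
  shows "PP \<beta> f (I \<union> J) = PP \<beta> f I * PP \<beta> f J"
proof (rule antisym)
  note pos = pf_bounds(1)[OF mono b]
  have prodpos: "0 < (\<Prod>s\<in>F. pf \<beta> f s)" for F using pos by (intro prod_pos) auto
  note nn = PP_nonneg[OF mono b]
  show "PP \<beta> f I * PP \<beta> f J \<le> PP \<beta> f (I \<union> J)"
    unfolding PP_def[of _ _ "I \<union> J"]
  proof (rule cINF_greatest)
    show "{F. finite F \<and> F \<subseteq> I \<union> J} \<noteq> {}" by auto
    fix F assume F: "F \<in> {F. finite F \<and> F \<subseteq> I \<union> J}"
    have eq: "F = (F \<inter> I) \<union> (F \<inter> J)" using F by auto
    have "(\<Prod>s\<in>F. pf \<beta> f s) = (\<Prod>s\<in>F \<inter> I. pf \<beta> f s) * (\<Prod>s\<in>F \<inter> J. pf \<beta> f s)"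
      using F disj by (subst eq, subst prod.union_disjoint) auto
    moreover have "PP \<beta> f I * PP \<beta> f J \<le> (\<Prod>s\<in>F \<inter> I. pf \<beta> f s) * (\<Prod>s\<in>F \<inter> J. pf \<beta> f s)"
    proof (rule mult_mono)
      show "PP \<beta> f I \<le> (\<Prod>s\<in>F \<inter> I. pf \<beta> f s)" "PP \<beta> f J \<le> (\<Prod>s\<in>F \<inter> J. pf \<beta> f s)"
        using F by (auto intro!: PP_le_prod[OF mono b])
      show "0 \<le> (\<Prod>s\<in>F \<inter> I. pf \<beta> f s)" using prodpos[of "F \<inter> I"] by simp
      show "0 \<le> PP \<beta> f J" by (rule nn)
    qed
    ultimately show "PP \<beta> f I * PP \<beta> f J \<le> (\<Prod>s\<in>F. pf \<beta> f s)" by simp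
  qed
  have step: "PP \<beta> f (I \<union> J) \<le> PP \<beta> f I * (\<Prod>s\<in>F2. pf \<beta> f s)" if F2: "finite F2" "F2 \<subseteq> J" for F2
  proof -
    have "PP \<beta> f (I \<union> J) / (\<Prod>s\<in>F2. pf \<beta> f s) \<le> PP \<beta> f I"
      unfolding PP_def[of _ _ I]
    proof (rule cINF_greatest)
      show "{F. finite F \<and> F \<subseteq> I} \<noteq> {}" by auto
      fix F1 assume F1: "F1 \<in> {F. finite F \<and> F \<subseteq> I}"
      have "F1 \<inter> F2 = {}" using F1 F2 disj by auto
      then have "PP \<beta> f (I \<union> J) \<le> (\<Prod>s\<in>F1 \<union> F2. pf \<beta> f s)"
        using F1 F2 by (intro PP_le_prod[OF mono b]) auto
      also have "\<dots> = (\<Prod>s\<in>F1. pf \<beta> f s) * (\<Prod>s\<in>F2. pf \<beta> f s)"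
        using F1 F2 \<open>F1 \<inter> F2 = {}\<close> by (intro prod.union_disjoint) auto
      finally show "PP \<beta> f (I \<union> J) / (\<Prod>s\<in>F2. pf \<beta> f s) \<le> (\<Prod>s\<in>F1. pf \<beta> f s)"
        using prodpos[of F2] by (simp add: divide_le_eq)
    qed
    then show ?thesis using prodpos[of F2] by (simp add: divide_le_eq mult.commute)
  qed
  show "PP \<beta> f (I \<union> J) \<le> PP \<beta> f I * PP \<beta> f J"
  proof (cases "PP \<beta> f I = 0")
    case True
    then show ?thesis using step[of "{}"] by simp
  next
    case False
    then have Ipos: "0 < PP \<beta> f I" using nn[of I] by simp
    have "PP \<beta> f (I \<union> J) / PP \<beta> f I \<le> PP \<beta> f J"
      unfolding PP_def[of _ _ J]
    proof (rule cINF_greatest)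
      show "{F. finite F \<and> F \<subseteq> J} \<noteq> {}" by auto
      fix F2 assume "F2 \<in> {F. finite F \<and> F \<subseteq> J}"
      then show "PP \<beta> f (I \<union> J) / PP \<beta> f I \<le> (\<Prod>s\<in>F2. pf \<beta> f s)"
        using step[of F2] Ipos by (simp add: divide_le_eq mult.commute)
    qed
    then show ?thesis using Ipos by (simp add: divide_le_eq mult.commute)
  qed
qed


lemma fin_ineq:
  fixes x :: "real \<Rightarrow> real"
  assumes "finite F" "\<forall>s\<in>F. 0 \<le> x s" "0 \<le> c" "0 \<le> b1" "b1 \<le> b2"
  shows "(b2 - b1) * (c + (\<Sum>s\<in>F. x s)) \<le>
      exp (b2 * c) * (\<Prod>s\<in>F. 1 + b2 * x s) - exp (b1 * c) * (\<Prod>s\<in>F. 1 + b1 * x s)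
    \<and> 1 \<le> exp (b1 * c) * (\<Prod>s\<in>F. 1 + b1 * x s)"
  using assms(1,2)
proof (induction F rule: finite_induct)
  case empty
  have e1: "1 \<le> exp (b1 * c)" using assms by simp
  have "exp (b2 * c) = exp (b1 * c) * exp ((b2 - b1) * c)" by (simp add: exp_add[symmetric] algebra_simps)
  also have "\<dots> \<ge> exp (b1 * c) * (1 + (b2 - b1) * c)"
    using exp_ge_add_one_self[of "(b2 - b1) * c"] by (intro mult_left_mono) auto
  finally have "exp (b2 * c) \<ge> exp (b1 * c) + exp (b1 * c) * ((b2 - b1) * c)" by (simp add: algebra_simps)
  moreover have "exp (b1 * c) * ((b2 - b1) * c) \<ge> 1 * ((b2 - b1) * c)"
    using e1 assms by (intro mult_right_mono) auto
  ultimately show ?case using e1 by simp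
next
  case (insert y F)
  define q where "q = exp (b2 * c) * (\<Prod>s\<in>F. 1 + b2 * x s)"
  define r where "r = exp (b1 * c) * (\<Prod>s\<in>F. 1 + b1 * x s)"
  have IH: "(b2 - b1) * (c + (\<Sum>s\<in>F. x s)) \<le> q - r" "1 \<le> r"
    using insert by (auto simp: q_def r_def)
  have xy: "0 \<le> x y" using insert by auto
  have xF: "0 \<le> (\<Sum>s\<in>F. x s)" using insert by (auto intro: sum_nonneg)
  have "0 \<le> (b2 - b1) * (c + (\<Sum>s\<in>F. x s))" using xF assms by auto
  then have qr: "r \<le> q" using IH by linarith
  have "b2 * q - b1 * r \<ge> b2 * r - b1 * r" using qr assms by (auto intro: mult_left_mono)
  also have "b2 * r - b1 * r = (b2 - b1) * r" by (simp add: algebra_simps)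
  also have "(b2 - b1) * r \<ge> (b2 - b1) * 1" using IH assms by (intro mult_left_mono) auto
  finally have k: "b2 - b1 \<le> b2 * q - b1 * r" by simp
  have k2: "x y * (b2 - b1) \<le> x y * (b2 * q - b1 * r)" using k xy by (intro mult_left_mono)
  have eq1: "exp (b2 * c) * (\<Prod>s\<in>insert y F. 1 + b2 * x s) = (1 + b2 * x y) * q"
    using insert by (simp add: q_def algebra_simps)
  have eq2: "exp (b1 * c) * (\<Prod>s\<in>insert y F. 1 + b1 * x s) = (1 + b1 * x y) * r"
    using insert by (simp add: r_def algebra_simps)
  have r2: "1 \<le> (1 + b1 * x y) * r"
  proof -
    have "1 * 1 \<le> (1 + b1 * x y) * r" using IH xy assms by (intro mult_mono) auto
    then show ?thesis by simp
  qed
  have "(b2 - b1) * (c + (\<Sum>s\<in>insert y F. x s)) = (b2 - b1) * (c + (\<Sum>s\<in>F. x s)) + x y * (b2 - b1)"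
    using insert by (simp add: algebra_simps)
  also have "\<dots> \<le> (q - r) + x y * (b2 * q - b1 * r)" using IH k2 by linarith
  also have "\<dots> = (1 + b2 * x y) * q - (1 + b1 * x y) * r" by (simp add: algebra_simps)
  finally show ?case using eq1 eq2 r2 by simp
qed

definition RR :: "real \<Rightarrow> (real \<Rightarrow> real) \<Rightarrow> real \<Rightarrow> real \<Rightarrow> real" where
  "RR \<beta> f a b = exp (\<beta> * (f b - f a)) * PP \<beta> f {a<..b}"

lemma EE_split:
  fixes f :: "real \<Rightarrow> real"
  assumes mono: "mono_on {0..} f" and b: "0 \<le> \<beta>" and ab: "0 \<le> a" "a \<le> b"
  shows "EE \<beta> f b = EE \<beta> f a * RR \<beta> f a b"
proof -
  have "{0<..b} = {0<..a} \<union> {a<..b}" "{0<..a} \<inter> {a<..b} = {}" using ab by auto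
  then have "PP \<beta> f {0<..b} = PP \<beta> f {0<..a} * PP \<beta> f {a<..b}"
    using PP_union[OF mono b] by simp
  moreover have "exp (\<beta> * f b) = exp (\<beta> * f a) * exp (\<beta> * (f b - f a))"
    by (simp add: exp_add[symmetric] algebra_simps)
  ultimately show ?thesis unfolding EE_def RR_def by (simp add: algebra_simps)
qed

lemma EE_pos:
  fixes f :: "real \<Rightarrow> real"
  assumes mono: "mono_on {0..} f" and b: "0 \<le> \<beta>" and t: "0 \<le> t"
  shows "0 < EE \<beta> f t"
proof -
  have "0 < exp (- \<beta> * (f t - f 0))" by simp
  also have "\<dots> \<le> PP \<beta> f {0<..t}" using PP_ge[OF mono b, of "{0<..t}" 0 t] t by auto
  finally show ?thesis unfolding EE_def by simp
qed

lemma EE_0: "f 0 = 0 \<Longrightarrow> EE \<beta> f 0 = 1"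
  unfolding EE_def by (simp add: PP_empty)

lemma RR_ge1:
  fixes f :: "real \<Rightarrow> real"
  assumes mono: "mono_on {0..} f" and b: "0 \<le> \<beta>" and ab: "0 \<le> a" "a \<le> b"
  shows "1 \<le> RR \<beta> f a b"
proof -
  have "1 = exp (\<beta> * (f b - f a)) * exp (- \<beta> * (f b - f a))" by (simp add: exp_add[symmetric])
  also have "\<dots> \<le> exp (\<beta> * (f b - f a)) * PP \<beta> f {a<..b}"
    using PP_ge[OF mono b, of "{a<..b}" a b] ab by (intro mult_left_mono) auto
  finally show ?thesis unfolding RR_def .
qed

lemma EE_mono:
  fixes f :: "real \<Rightarrow> real"
  assumes mono: "mono_on {0..} f" and b: "0 \<le> \<beta>" and ab: "0 \<le> a" "a \<le> b"
  shows "EE \<beta> f a \<le> EE \<beta> f b"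
proof -
  have "EE \<beta> f a * 1 \<le> EE \<beta> f a * RR \<beta> f a b"
    using RR_ge1[OF assms] EE_pos[OF mono b ab(1)] by (intro mult_left_mono) auto
  then show ?thesis using EE_split[OF assms] by simp
qed

lemma RR_jump:
  fixes f :: "real \<Rightarrow> real"
  assumes mono: "mono_on {0..} f" and b: "0 \<le> \<beta>" and ts: "0 \<le> t" "t < s" "s \<le> u"
  shows "RR \<beta> f t u \<le> exp (\<beta> * (f u - f t - jmp f s)) * (1 + \<beta> * jmp f s)"
proof -
  have "PP \<beta> f {t<..u} \<le> (\<Prod>s\<in>{s}. pf \<beta> f s)"
    using ts by (intro PP_le_prod[OF mono b]) auto
  then have "RR \<beta> f t u \<le> exp (\<beta> * (f u - f t)) * pf \<beta> f s"
    unfolding RR_def by (intro mult_left_mono) auto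
  also have "\<dots> = exp (\<beta> * (f u - f t - jmp f s)) * (1 + \<beta> * jmp f s)"
  proof -
    have "exp (\<beta> * (f u - f t - jmp f s)) = exp (\<beta> * (f u - f t)) * exp (- \<beta> * jmp f s)"
      by (simp add: exp_add[symmetric] algebra_simps)
    then show ?thesis unfolding pf_def by (simp add: algebra_simps)
  qed
  finally show ?thesis .
qed

lemma RR_diff:
  fixes f :: "real \<Rightarrow> real"
  assumes mono: "mono_on {0..} f" and b1: "0 \<le> b1" and b12: "b1 \<le> b2" and ab: "0 \<le> a" "a \<le> b"
  shows "(b2 - b1) * (f b - f a) \<le> RR b2 f a b - RR b1 f a b"
proof -
  have b2: "0 \<le> b2" using b1 b12 by simp
  define D where "D = f b - f a"
  have key: "RR b1 f a b + (b2 - b1) * D \<le> exp (b2 * D) * (\<Prod>s\<in>F. pf b2 f s)"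
    if F: "finite F" "F \<subseteq> {a<..b}" for F
  proof -
    define c where "c = D - (\<Sum>s\<in>F. jmp f s)"
    have c0: "0 \<le> c" using sum_jmp_le[OF mono F ab] unfolding c_def D_def by simp
    have rw: "exp (\<beta> * D) * (\<Prod>s\<in>F. pf \<beta> f s) = exp (\<beta> * c) * (\<Prod>s\<in>F. 1 + \<beta> * jmp f s)" for \<beta>
    proof -
      have "(\<Prod>s\<in>F. pf \<beta> f s) = (\<Prod>s\<in>F. 1 + \<beta> * jmp f s) * (\<Prod>s\<in>F. exp (- \<beta> * jmp f s))"
        unfolding pf_def by (simp add: prod.distrib)
      also have "(\<Prod>s\<in>F. exp (- \<beta> * jmp f s)) = exp (- \<beta> * (\<Sum>s\<in>F. jmp f s))"
        using F by (simp add: exp_sum sum_distrib_left)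
      finally show ?thesis unfolding c_def
        by (simp add: algebra_simps exp_diff exp_minus field_simps)
    qed
    have G: "(b2 - b1) * (c + (\<Sum>s\<in>F. jmp f s)) \<le>
      exp (b2 * c) * (\<Prod>s\<in>F. 1 + b2 * jmp f s) - exp (b1 * c) * (\<Prod>s\<in>F. 1 + b1 * jmp f s)"
      using fin_ineq[of F "jmp f" c b1 b2] F c0 b1 b12 jmp_nonneg[OF mono] by auto
    have "RR b1 f a b \<le> exp (b1 * D) * (\<Prod>s\<in>F. pf b1 f s)"
      unfolding RR_def D_def using F by (intro mult_left_mono PP_le_prod[OF mono b1]) auto
    then show ?thesis using G rw[of b1] rw[of b2] unfolding c_def by simp
  qed
  have "(RR b1 f a b + (b2 - b1) * D) / exp (b2 * D) \<le> PP b2 f {a<..b}"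
    unfolding PP_def
  proof (rule cINF_greatest)
    show "{F. finite F \<and> F \<subseteq> {a<..b}} \<noteq> {}" by auto
    fix F assume "F \<in> {F. finite F \<and> F \<subseteq> {a<..b}}"
    then show "(RR b1 f a b + (b2 - b1) * D) / exp (b2 * D) \<le> (\<Prod>s\<in>F. pf b2 f s)"
      using key[of F] by (simp add: divide_le_eq mult.commute)
  qed
  then have "RR b1 f a b + (b2 - b1) * D \<le> RR b2 f a b"
    unfolding RR_def D_def by (simp add: divide_le_eq mult.commute)
  then show ?thesis unfolding D_def by simp
qed


lemma tele:
  fixes f :: "real \<Rightarrow> real"
  assumes mono: "mono_on {0..} f" and f0: "f 0 = 0" and b1: "0 \<le> b1" and b12: "b1 < b2"
  shows "(\<Sum>i<N. ennreal (EE b1 f (real i / 2^n) / EE b2 f (real (Suc i) / 2^n))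
      * ennreal (f (real (Suc i) / 2^n) - f (real i / 2^n))) \<le> ennreal (1 / (b2 - b1))"
proof -
  have b2: "0 \<le> b2" using b1 b12 by simp
  define t where "t i = real i / 2^n" for i :: nat
  define \<Psi> where "\<Psi> i = EE b1 f (t i) / EE b2 f (t i)" for i
  have t0: "0 \<le> t i" "t i \<le> t (Suc i)" for i by (auto simp: t_def divide_right_mono)
  have Ep: "0 < EE b1 f (t i)" "0 < EE b2 f (t i)" for i using EE_pos[OF mono b1] EE_pos[OF mono b2] t0 by auto
  have cell: "(b2 - b1) * (EE b1 f (t i) / EE b2 f (t (Suc i)) * (f (t (Suc i)) - f (t i))) \<le> \<Psi> i - \<Psi> (Suc i)" for i
  proof -
    define R1 where "R1 = RR b1 f (t i) (t (Suc i))"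
    define R2 where "R2 = RR b2 f (t i) (t (Suc i))"
    have s1: "EE b1 f (t (Suc i)) = EE b1 f (t i) * R1" unfolding R1_def by (rule EE_split[OF mono b1 t0])
    have s2: "EE b2 f (t (Suc i)) = EE b2 f (t i) * R2" unfolding R2_def by (rule EE_split[OF mono b2 t0])
    have d: "(b2 - b1) * (f (t (Suc i)) - f (t i)) \<le> R2 - R1" unfolding R1_def R2_def
      using RR_diff[OF mono b1 _ t0] b12 by auto
    have R2p: "0 < R2" using RR_ge1[OF mono b2 t0(1)[of i] t0(2)[of i]] unfolding R2_def by simp
    have "\<Psi> i - \<Psi> (Suc i) = EE b1 f (t i) / EE b2 f (t (Suc i)) * (R2 - R1)"
      unfolding \<Psi>_def s1 s2 using Ep[of i] R2p by (simp add: field_simps)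
    moreover have "EE b1 f (t i) / EE b2 f (t (Suc i)) * ((b2 - b1) * (f (t (Suc i)) - f (t i)))
        \<le> EE b1 f (t i) / EE b2 f (t (Suc i)) * (R2 - R1)"
      using d Ep[of i] Ep[of "Suc i"] by (intro mult_left_mono) auto
    ultimately show ?thesis by (metis mult.left_commute)
  qed
  have nn: "0 \<le> EE b1 f (t i) / EE b2 f (t (Suc i)) * (f (t (Suc i)) - f (t i))" for i
    using Ep[of i] Ep[of "Suc i"] mono_onD[OF mono, of "t i" "t (Suc i)"] t0[of i] by auto
  have "(\<Sum>i<N. ennreal (EE b1 f (t i) / EE b2 f (t (Suc i))) * ennreal (f (t (Suc i)) - f (t i)))
      = ennreal (\<Sum>i<N. EE b1 f (t i) / EE b2 f (t (Suc i)) * (f (t (Suc i)) - f (t i)))"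
  proof -
    have D: "0 \<le> f (t (Suc i)) - f (t i)" for i
      using mono_onD[OF mono, of "t i" "t (Suc i)"] t0[of i] by auto
    have X: "0 \<le> EE b1 f (t i) / EE b2 f (t (Suc i))" for i
      using Ep[of i] Ep[of "Suc i"] by auto
    have "(\<Sum>i<N. ennreal (EE b1 f (t i) / EE b2 f (t (Suc i))) * ennreal (f (t (Suc i)) - f (t i)))
      = (\<Sum>i<N. ennreal (EE b1 f (t i) / EE b2 f (t (Suc i)) * (f (t (Suc i)) - f (t i))))"
      by (intro sum.cong refl, subst ennreal_mult[OF X D]) simp
    also have "\<dots> = ennreal (\<Sum>i<N. EE b1 f (t i) / EE b2 f (t (Suc i)) * (f (t (Suc i)) - f (t i)))"
      by (rule sum_ennreal) (metis X D mult_nonneg_nonneg)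
    finally show ?thesis .
  qed
  also have "\<dots> \<le> ennreal (1 / (b2 - b1))"
  proof (rule ennreal_leI)
    have "(b2 - b1) * (\<Sum>i<N. EE b1 f (t i) / EE b2 f (t (Suc i)) * (f (t (Suc i)) - f (t i)))
        \<le> (\<Sum>i<N. \<Psi> i - \<Psi> (Suc i))"
      unfolding sum_distrib_left by (intro sum_mono cell)
    also have "\<dots> = \<Psi> 0 - \<Psi> N" by (rule sum_lessThan_telescope')
    also have "\<dots> \<le> 1"
    proof -
      have "\<Psi> 0 = 1" unfolding \<Psi>_def t_def using EE_0[of f, OF f0] by simp
      moreover have "0 \<le> \<Psi> N" unfolding \<Psi>_def using Ep[of N] by (auto intro: less_imp_le)
      ultimately show ?thesis by simp
    qed
    finally show "(\<Sum>i<N. EE b1 f (t i) / EE b2 f (t (Suc i)) * (f (t (Suc i)) - f (t i))) \<le> 1 / (b2 - b1)"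
      using b12 by (simp add: field_simps mult.commute)
  qed
  finally show ?thesis unfolding t_def .
qed

lemma section_measurable:
  assumes P: "predictable M G X" and filt: "filtration_on M G" and \<omega>: "\<omega> \<in> space M"
  shows "(\<lambda>s. X s \<omega>) \<in> borel_measurable (restrict_space borel {0..})"
proof -
  have sub: "\<And>s B. 0 \<le> s \<Longrightarrow> B \<in> sets (G s) \<Longrightarrow> B \<subseteq> space M"
    using filt unfolding filtration_on_def by (meson sets.sets_into_space subsetD)
  let ?\<Omega> = "{0..} \<times> space M"
  let ?N = "{{0} \<times> B | B. B \<in> sets (G 0)} \<union>
      {{s<..t} \<times> B | s t B. 0 \<le> s \<and> s \<le> t \<and> B \<in> sets (G s)}"
  have "(\<lambda>s. (s, \<omega>)) \<in> restrict_space borel {0..} \<rightarrow>\<^sub>M predictable_sigma M G"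
    unfolding predictable_sigma_def
  proof (rule measurable_measure_of)
    show "?N \<subseteq> Pow ?\<Omega>" using sub by fastforce
    show "(\<lambda>s. (s, \<omega>)) \<in> space (restrict_space borel {0..}) \<rightarrow> ?\<Omega>"
      using \<omega> by (auto simp: space_restrict_space)
    fix y assume "y \<in> ?N"
    then consider (a) B where "y = {0} \<times> B" | (b) s t B where "y = {s<..t} \<times> B"
      by blast
    then show "(\<lambda>s. (s, \<omega>)) -` y \<inter> space (restrict_space borel {0..}) \<in> sets (restrict_space borel {0..})"
    proof cases
      case a
      then have "(\<lambda>s. (s, \<omega>)) -` y \<inter> space (restrict_space borel {0..}) = {0..} \<inter> (if \<omega> \<in> B then {0} else {})"
        by (auto simp: space_restrict_space)
      then show ?thesis by (simp add: sets_restrict_space_iff)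
    next
      case b
      then have "(\<lambda>s. (s, \<omega>)) -` y \<inter> space (restrict_space borel {0..}) = {0..} \<inter> (if \<omega> \<in> B then {s<..t} else {})"
        by (auto simp: space_restrict_space)
      then show ?thesis by (simp add: sets_restrict_space_iff)
    qed
  qed
  from measurable_comp[OF this P[unfolded predictable_def]]
  show ?thesis by (simp add: comp_def)
qed

lemma alpha_meas:
  fixes g :: "real \<Rightarrow> real"
  assumes m: "g \<in> borel_measurable (restrict_space borel {0..})"
    and S: "S \<in> sets borel" "S \<subseteq> {0<..}"
  shows "(\<lambda>s. ennreal ((g s)\<^sup>2) * indicator S s) \<in> borel_measurable (dC C \<omega>')"
proof -
  define Y where "Y s = (if s \<in> {0..} then g s else 0)" for s :: real
  have Ym: "Y \<in> borel_measurable borel"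
    using m unfolding Y_def by (subst (asm) measurable_restrict_space_iff) auto
  have eq: "(\<lambda>s. ennreal ((g s)\<^sup>2) * indicator S s) = (\<lambda>s. ennreal ((Y s)\<^sup>2) * indicator S s)"
    using S(2) by (auto simp: Y_def indicator_def fun_eq_iff)
  have "(\<lambda>s. ennreal ((Y s)\<^sup>2) * indicator S s) \<in> borel_measurable borel"
    using Ym S(1) by measurable
  then show ?thesis unfolding eq dC_def
    by (subst measurable_cong_sets[OF sets_interval_measure refl])
qed


definition Aint :: "(real \<Rightarrow> 'a \<Rightarrow> real) \<Rightarrow> (real \<Rightarrow> 'a \<Rightarrow> real) \<Rightarrow> ('a \<Rightarrow> ereal) \<Rightarrow> 'a \<Rightarrow> real \<Rightarrow> real \<Rightarrow> ennreal" where
  "Aint C \<alpha> T \<omega> u v = (\<integral>\<^sup>+ s. ennreal ((\<alpha> s \<omega>)\<^sup>2) * indicator {s. u < s \<and> s \<le> v \<and> ereal s \<le> T \<omega>} s \<partial>dC C \<omega>)"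

lemma cellset_borel: "{s::real. u < s \<and> s \<le> v \<and> ereal s \<le> T} \<in> sets borel"
  by measurable

lemma A_split:
  assumes m: "(\<lambda>s. \<alpha> s \<omega>) \<in> borel_measurable (restrict_space borel {0..})"
    and uv: "0 \<le> u" "u \<le> v"
  shows "A_enn C \<alpha> T v \<omega> = A_enn C \<alpha> T u \<omega> + Aint C \<alpha> T \<omega> u v"
proof -
  let ?S1 = "{s. 0 < s \<and> s \<le> u \<and> ereal s \<le> T \<omega>}"
  let ?S2 = "{s. u < s \<and> s \<le> v \<and> ereal s \<le> T \<omega>}"
  have "{s. 0 < s \<and> s \<le> v \<and> ereal s \<le> T \<omega>} = ?S1 \<union> ?S2" "?S1 \<inter> ?S2 = {}" using uv by auto
  then have ind: "indicator {s. 0 < s \<and> s \<le> v \<and> ereal s \<le> T \<omega>} x = (indicator ?S1 x + indicator ?S2 x :: ennreal)" for x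
    using uv by (auto simp: indicator_def)
  have m1: "(\<lambda>s. ennreal ((\<alpha> s \<omega>)\<^sup>2) * indicator ?S1 s) \<in> borel_measurable (dC C \<omega>)"
    by (rule alpha_meas[OF m]) (auto intro: cellset_borel)
  have m2: "(\<lambda>s. ennreal ((\<alpha> s \<omega>)\<^sup>2) * indicator ?S2 s) \<in> borel_measurable (dC C \<omega>)"
    using uv by (intro alpha_meas[OF m]) (auto intro: cellset_borel)
  show ?thesis unfolding A_enn_def Aint_def ind distrib_left
    by (rule nn_integral_add[OF m1 m2])
qed

lemma A_facts:
  assumes m: "(\<lambda>s. \<alpha> s \<omega>) \<in> borel_measurable (restrict_space borel {0..})"
    and fin: "\<forall>t\<ge>0. A_enn C \<alpha> T t \<omega> < \<infinity>"
  shows "mono_on {0..} (\<lambda>t. A_proc C \<alpha> T t \<omega>)" "A_proc C \<alpha> T 0 \<omega> = 0"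
    "\<And>u v. 0 \<le> u \<Longrightarrow> u \<le> v \<Longrightarrow> ennreal (A_proc C \<alpha> T v \<omega> - A_proc C \<alpha> T u \<omega>) = Aint C \<alpha> T \<omega> u v"
proof -
  show cell: "ennreal (A_proc C \<alpha> T v \<omega> - A_proc C \<alpha> T u \<omega>) = Aint C \<alpha> T \<omega> u v"
    if uv: "0 \<le> u" "u \<le> v" for u v
  proof -
    have sp: "A_enn C \<alpha> T v \<omega> = A_enn C \<alpha> T u \<omega> + Aint C \<alpha> T \<omega> u v" by (rule A_split[where \<alpha>=\<alpha> and \<omega>=\<omega>, OF m uv])
    have fv: "A_enn C \<alpha> T v \<omega> < \<infinity>" using fin uv by auto
    then have fu: "A_enn C \<alpha> T u \<omega> < \<infinity>" "Aint C \<alpha> T \<omega> u v < \<infinity>" using sp by (auto simp: top_unique)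
    have "A_proc C \<alpha> T v \<omega> = A_proc C \<alpha> T u \<omega> + enn2real (Aint C \<alpha> T \<omega> u v)"
      unfolding A_proc_def sp using fu by (simp add: enn2real_plus)
    then show ?thesis using fu by simp
  qed
  show "mono_on {0..} (\<lambda>t. A_proc C \<alpha> T t \<omega>)"
  proof (rule mono_onI)
    fix u v :: real assume "u \<in> {0..}" "v \<in> {0..}" "u \<le> v"
    then have "ennreal (A_proc C \<alpha> T v \<omega> - A_proc C \<alpha> T u \<omega>) = Aint C \<alpha> T \<omega> u v" using cell by auto
    moreover have "Aint C \<alpha> T \<omega> u v < \<infinity>"
    proof -
      have sp: "A_enn C \<alpha> T v \<omega> = A_enn C \<alpha> T u \<omega> + Aint C \<alpha> T \<omega> u v"
        using A_split[where \<alpha>=\<alpha> and \<omega>=\<omega>, OF m, of u v C T] \<open>u \<in> {0..}\<close> \<open>u \<le> v\<close> by auto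
      have "A_enn C \<alpha> T v \<omega> < \<infinity>" using fin \<open>v \<in> {0..}\<close> by auto
      then show ?thesis using sp by (auto simp: top_unique)
    qed
    ultimately have "0 \<le> A_proc C \<alpha> T v \<omega> - A_proc C \<alpha> T u \<omega> \<or> A_proc C \<alpha> T v \<omega> - A_proc C \<alpha> T u \<omega> < 0" by auto
    show "A_proc C \<alpha> T u \<omega> \<le> A_proc C \<alpha> T v \<omega>"
    proof (rule ccontr)
      assume nle: "\<not> ?thesis"
      then have "ennreal (A_proc C \<alpha> T v \<omega> - A_proc C \<alpha> T u \<omega>) = 0" by (simp add: ennreal_eq_0_iff)
      then have "Aint C \<alpha> T \<omega> u v = 0" using \<open>ennreal _ = Aint C \<alpha> T \<omega> u v\<close> by simp
      then have "A_enn C \<alpha> T v \<omega> = A_enn C \<alpha> T u \<omega>" using A_split[where \<alpha>=\<alpha> and \<omega>=\<omega>, OF m, of u v C T] \<open>u \<in> {0..}\<close> \<open>u \<le> v\<close> by simp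
      then have "A_proc C \<alpha> T v \<omega> = A_proc C \<alpha> T u \<omega>" unfolding A_proc_def by simp
      then show False using nle by simp
    qed
  qed
  show "A_proc C \<alpha> T 0 \<omega> = 0" unfolding A_proc_def A_enn_def by simp
qed

lemma A_rcont:
  assumes m: "(\<lambda>s. \<alpha> s \<omega>) \<in> borel_measurable (restrict_space borel {0..})"
    and fin: "\<forall>t\<ge>0. A_enn C \<alpha> T t \<omega> < \<infinity>" and t: "0 \<le> t" and e: "0 < \<epsilon>"
  shows "\<exists>h>0. \<forall>v. t \<le> v \<and> v \<le> t + h \<longrightarrow> A_proc C \<alpha> T v \<omega> - A_proc C \<alpha> T t \<omega> < \<epsilon>"
proof -
  note AF = A_facts[where \<alpha>=\<alpha> and \<omega>=\<omega>, OF m fin]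
  define g where "g m s = ennreal ((\<alpha> s \<omega>)\<^sup>2) * indicator {s. t < s \<and> s \<le> t + 1 / Suc m \<and> ereal s \<le> T \<omega>} s" for m :: nat and s
  have gm: "g m \<in> borel_measurable (dC C \<omega>)" for m
    unfolding g_def using t by (intro alpha_meas[OF m]) (auto intro: cellset_borel)
  have gi: "integral\<^sup>N (dC C \<omega>) (g m) = ennreal (A_proc C \<alpha> T (t + 1 / Suc m) \<omega> - A_proc C \<alpha> T t \<omega>)" for m
  proof -
    have "integral\<^sup>N (dC C \<omega>) (g m) = Aint C \<alpha> T \<omega> t (t + 1 / Suc m)"
      unfolding g_def Aint_def by (rule refl)
    also have "\<dots> = ennreal (A_proc C \<alpha> T (t + 1 / Suc m) \<omega> - A_proc C \<alpha> T t \<omega>)"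
      using AF(3)[OF t, of "t + 1 / Suc m"] by simp
    finally show ?thesis .
  qed
  have dec: "decseq g"
  proof (rule decseq_SucI, rule le_funI)
    fix m s
    have "1 / real (Suc (Suc m)) \<le> 1 / real (Suc m)" by (simp add: frac_le)
    then show "g (Suc m) s \<le> g m s" unfolding g_def
      by (intro mult_left_mono) (auto simp: indicator_def)
  qed
  have "(\<integral>\<^sup>+ s. (INF m. g m s) \<partial>dC C \<omega>) = (INF m. integral\<^sup>N (dC C \<omega>) (g m))"
    by (rule nn_integral_monotone_convergence_INF_decseq[OF dec gm]) (simp add: gi)
  moreover have "(INF m. g m s) = 0" for s
  proof (cases "t < s")
    case True
    obtain m :: nat where "1 / Suc m < s - t" using True by (metis diff_gt_0_iff_gt nat_approx_posE)
    then have "g m s = 0" unfolding g_def by auto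
    then show ?thesis by (metis (mono_tags, lifting) INF_lower bot.extremum_uniqueI UNIV_I bot_ennreal)
  next
    case False
    then have "g 0 s = 0" unfolding g_def by auto
    then show ?thesis by (metis (mono_tags, lifting) INF_lower bot.extremum_uniqueI UNIV_I bot_ennreal)
  qed
  ultimately have "(INF m. integral\<^sup>N (dC C \<omega>) (g m)) = 0" by simp
  then have "(INF m. integral\<^sup>N (dC C \<omega>) (g m)) < ennreal \<epsilon>" using e by simp
  then obtain m where "integral\<^sup>N (dC C \<omega>) (g m) < ennreal \<epsilon>" by (auto simp: INF_less_iff)
  then have lt: "A_proc C \<alpha> T (t + 1 / Suc m) \<omega> - A_proc C \<alpha> T t \<omega> < \<epsilon>"
    unfolding gi using e by (smt (verit) ennreal_less_iff)
  show ?thesis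
  proof (intro exI[of _ "1 / Suc m"] conjI allI impI)
    fix v assume v: "t \<le> v \<and> v \<le> t + 1 / Suc m"
    then have "A_proc C \<alpha> T v \<omega> \<le> A_proc C \<alpha> T (t + 1 / Suc m) \<omega>"
      using t by (intro mono_onD[OF AF(1)]) auto
    then show "A_proc C \<alpha> T v \<omega> - A_proc C \<alpha> T t \<omega> < \<epsilon>" using lt by simp
  qed simp
qed


definition idx :: "nat \<Rightarrow> real \<Rightarrow> nat" where
  "idx n s = nat (\<lceil>s * 2^n\<rceil> - 1)"

lemma idx_props:
  assumes s: "0 < s"
  shows "real (idx n s) / 2^n < s" "s \<le> real (Suc (idx n s)) / 2^n"
    "real (idx n s) = real_of_int \<lceil>s * 2^n\<rceil> - 1"
    "s \<le> real N \<Longrightarrow> idx n s < N * 2^n"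
proof -
  have c1: "1 \<le> \<lceil>s * 2^n\<rceil>" using s by (simp add: one_le_ceiling)
  then show ri: "real (idx n s) = real_of_int \<lceil>s * 2^n\<rceil> - 1" unfolding idx_def by simp
  have "real_of_int \<lceil>s * 2^n\<rceil> - 1 < s * 2^n" "s * 2^n \<le> real_of_int \<lceil>s * 2^n\<rceil>"
    by linarith+
  then show "real (idx n s) / 2^n < s" "s \<le> real (Suc (idx n s)) / 2^n"
    using ri by (simp_all add: divide_less_eq le_divide_eq)
  assume "s \<le> real N"
  then have "s * 2^n \<le> real N * 2^n" by simp
  then have "\<lceil>s * 2^n\<rceil> \<le> int (N * 2^n)" by (simp add: ceiling_le_iff)
  then show "idx n s < N * 2^n" unfolding idx_def using c1 by linarith
qed

lemma idx_unique:
  assumes s: "0 < s"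
  shows "(real i / 2^n < s \<and> s \<le> real (Suc i) / 2^n) \<longleftrightarrow> i = idx n s"
proof -
  have "(real i / 2^n < s \<and> s \<le> real (Suc i) / 2^n) \<longleftrightarrow> (real i < s * 2^n \<and> s * 2^n \<le> real i + 1)"
    by (simp add: divide_less_eq le_divide_eq add.commute)
  also have "\<dots> \<longleftrightarrow> \<lceil>s * 2^n\<rceil> = int i + 1"
    by (simp add: ceiling_eq_iff add.commute)
  also have "\<dots> \<longleftrightarrow> i = idx n s"
    using s unfolding idx_def by (auto simp: one_le_ceiling)
  finally show ?thesis .
qed

lemma idx_mono:
  assumes s: "0 < s"
  shows "real (idx n s) / 2^n \<le> real (idx (Suc n) s) / 2^(Suc n)"
    "real (Suc (idx (Suc n) s)) / 2^(Suc n) \<le> real (Suc (idx n s)) / 2^n"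
proof -
  define x where "x = s * 2^n"
  have x2: "s * 2^(Suc n) = 2 * x" unfolding x_def by simp
  have i1: "real (idx n s) = real_of_int \<lceil>x\<rceil> - 1" using idx_props(3)[OF s] x_def by simp
  have i2: "real (idx (Suc n) s) = real_of_int \<lceil>2 * x\<rceil> - 1" using idx_props(3)[OF s, of "Suc n"] x2 by (simp only:)
  have a: "real_of_int \<lceil>x\<rceil> - 1 < x" "x \<le> real_of_int \<lceil>x\<rceil>" by linarith+
  have b: "2 * x \<le> real_of_int \<lceil>2 * x\<rceil>" "real_of_int \<lceil>2 * x\<rceil> - 1 < 2 * x" by linarith+
  have "2 * \<lceil>x\<rceil> - 1 \<le> \<lceil>2 * x\<rceil>"
  proof -
    have "real_of_int (2 * \<lceil>x\<rceil> - 2) < real_of_int \<lceil>2 * x\<rceil>" using a(1) b(1)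
      by (simp only: of_int_diff of_int_mult of_int_numeral)
    then have "2 * \<lceil>x\<rceil> - 2 < \<lceil>2 * x\<rceil>" by (simp only: of_int_less_iff)
    then show ?thesis by linarith
  qed
  then have "real_of_int (2 * \<lceil>x\<rceil> - 1) \<le> real_of_int \<lceil>2 * x\<rceil>" by (simp only: of_int_le_iff)
  then have "2 * real_of_int \<lceil>x\<rceil> - 1 \<le> real_of_int \<lceil>2 * x\<rceil>"
    by (simp only: of_int_diff of_int_mult of_int_numeral of_int_1)
  then have "2 * real (idx n s) \<le> real (idx (Suc n) s)" using i1 i2 by linarith
  then show "real (idx n s) / 2^n \<le> real (idx (Suc n) s) / 2^(Suc n)"
    by (simp add: field_simps)
  have "\<lceil>2 * x\<rceil> \<le> 2 * \<lceil>x\<rceil>"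
  proof -
    have "2 * x \<le> real_of_int (2 * \<lceil>x\<rceil>)" using a by simp
    then show ?thesis by (simp add: ceiling_le_iff)
  qed
  then have "real_of_int \<lceil>2 * x\<rceil> \<le> real_of_int (2 * \<lceil>x\<rceil>)" by (simp only: of_int_le_iff)
  then have "real_of_int \<lceil>2 * x\<rceil> \<le> 2 * real_of_int \<lceil>x\<rceil>"
    by (simp only: of_int_mult of_int_numeral)
  then have "real (Suc (idx (Suc n) s)) \<le> 2 * real (Suc (idx n s))" using i1 i2 by simp
  then have "real (Suc (idx (Suc n) s)) / 2^(Suc n) \<le> (2 * real (Suc (idx n s))) / 2^(Suc n)"
    by (rule divide_right_mono) simp
  also have "\<dots> = real (Suc (idx n s)) / 2^n" by (simp add: field_simps)
  finally show "real (Suc (idx (Suc n) s)) / 2^(Suc n) \<le> real (Suc (idx n s)) / 2^n" .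
qed


definition kk :: "real \<Rightarrow> real \<Rightarrow> (real \<Rightarrow> real) \<Rightarrow> nat \<Rightarrow> nat \<Rightarrow> real" where
  "kk b1 b2 f n i = EE b1 f (real i / 2^n) / EE b2 f (real (Suc i) / 2^n)"

definition HH :: "real \<Rightarrow> real \<Rightarrow> (real \<Rightarrow> 'a \<Rightarrow> real) \<Rightarrow> ('a \<Rightarrow> ereal) \<Rightarrow> 'a \<Rightarrow> (real \<Rightarrow> real) \<Rightarrow> nat \<Rightarrow> real \<Rightarrow> ennreal" where
  "HH b1 b2 \<alpha> T \<omega> f n s = (\<Sum>i<n * 2^n. ennreal (kk b1 b2 f n i) *
      (ennreal ((\<alpha> s \<omega>)\<^sup>2) * indicator {u. real i / 2^n < u \<and> u \<le> real (Suc i) / 2^n \<and> ereal u \<le> T \<omega>} s))"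

lemma HH_meas:
  assumes m: "(\<lambda>s. \<alpha> s \<omega>) \<in> borel_measurable (restrict_space borel {0..})"
  shows "HH b1 b2 \<alpha> T \<omega> f n \<in> borel_measurable (dC C \<omega>)"
proof -
  have "(\<lambda>s. ennreal ((\<alpha> s \<omega>)\<^sup>2) * indicator {u. real i / 2^n < u \<and> u \<le> real (Suc i) / 2^n \<and> ereal u \<le> T \<omega>} s)
      \<in> borel_measurable (dC C \<omega>)" for i
  proof (rule alpha_meas[OF m])
    show "{u. real i / 2 ^ n < u \<and> u \<le> real (Suc i) / 2 ^ n \<and> ereal u \<le> T \<omega>} \<subseteq> {0<..}"
    proof
      fix u assume "u \<in> {u. real i / 2 ^ n < u \<and> u \<le> real (Suc i) / 2 ^ n \<and> ereal u \<le> T \<omega>}"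
      then have "real i / 2 ^ n < u" by simp
      moreover have "0 \<le> real i / 2 ^ n" by simp
      ultimately have "0 < u" by linarith
      then show "u \<in> {0<..}" by simp
    qed
  qed (rule cellset_borel)
  then show ?thesis unfolding HH_def by measurable
qed

lemma HH_int:
  assumes m: "(\<lambda>s. \<alpha> s \<omega>) \<in> borel_measurable (restrict_space borel {0..})"
    and fin: "\<forall>t\<ge>0. A_enn C \<alpha> T t \<omega> < \<infinity>" and b1: "0 \<le> b1" and b12: "b1 < b2"
  shows "integral\<^sup>N (dC C \<omega>) (HH b1 b2 \<alpha> T \<omega> (\<lambda>t. A_proc C \<alpha> T t \<omega>) n) \<le> ennreal (1 / (b2 - b1))"
proof -
  let ?f = "\<lambda>t. A_proc C \<alpha> T t \<omega>"
  note AF = A_facts[where \<alpha>=\<alpha> and \<omega>=\<omega>, OF m fin]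
  have mi: "(\<lambda>s. ennreal ((\<alpha> s \<omega>)\<^sup>2) * indicator {u. real i / 2^n < u \<and> u \<le> real (Suc i) / 2^n \<and> ereal u \<le> T \<omega>} s)
      \<in> borel_measurable (dC C \<omega>)" for i
  proof (rule alpha_meas[OF m])
    show "{u. real i / 2 ^ n < u \<and> u \<le> real (Suc i) / 2 ^ n \<and> ereal u \<le> T \<omega>} \<subseteq> {0<..}"
    proof
      fix u assume "u \<in> {u. real i / 2 ^ n < u \<and> u \<le> real (Suc i) / 2 ^ n \<and> ereal u \<le> T \<omega>}"
      then have "real i / 2 ^ n < u" by simp
      moreover have "0 \<le> real i / 2 ^ n" by simp
      ultimately have "0 < u" by linarith
      then show "u \<in> {0<..}" by simp
    qed
  qed (rule cellset_borel)
  have "integral\<^sup>N (dC C \<omega>) (HH b1 b2 \<alpha> T \<omega> ?f n) = (\<Sum>i<n * 2^n. ennreal (kk b1 b2 ?f n i) *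
      Aint C \<alpha> T \<omega> (real i / 2^n) (real (Suc i) / 2^n))"
  proof -
    have mc: "(\<lambda>s. ennreal (kk b1 b2 ?f n i) * (ennreal ((\<alpha> s \<omega>)\<^sup>2) * indicator {u. real i / 2^n < u \<and> u \<le> real (Suc i) / 2^n \<and> ereal u \<le> T \<omega>} s))
      \<in> borel_measurable (dC C \<omega>)" for i
      by (rule borel_measurable_times_ennreal[OF borel_measurable_const mi])
    show ?thesis unfolding HH_def Aint_def
      by (subst nn_integral_sum[OF mc]) (intro sum.cong refl nn_integral_cmult mi)
  qed
  also have "\<dots> = (\<Sum>i<n * 2^n. ennreal (kk b1 b2 ?f n i) *
      ennreal (?f (real (Suc i) / 2^n) - ?f (real i / 2^n)))"
    by (intro sum.cong refl, subst AF(3)) (auto simp: divide_right_mono)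
  also have "\<dots> \<le> ennreal (1 / (b2 - b1))"
    unfolding kk_def by (rule tele[OF AF(1) AF(2) b1 b12])
  finally show ?thesis .
qed

lemma HH_val:
  assumes s: "0 < s" "s \<le> real n"
  shows "HH b1 b2 \<alpha> T \<omega> f n s = ennreal (kk b1 b2 f n (idx n s)) * (ennreal ((\<alpha> s \<omega>)\<^sup>2) * indicator {u. ereal u \<le> T \<omega>} s)"
proof -
  have "HH b1 b2 \<alpha> T \<omega> f n s = (\<Sum>i<n * 2^n. if i = idx n s then ennreal (kk b1 b2 f n i) * (ennreal ((\<alpha> s \<omega>)\<^sup>2) * indicator {u. ereal u \<le> T \<omega>} s) else 0)"
    unfolding HH_def
  proof (intro sum.cong refl)
    fix i
    have "s \<in> {u. real i / 2^n < u \<and> u \<le> real (Suc i) / 2^n \<and> ereal u \<le> T \<omega>} \<longleftrightarrow> i = idx n s \<and> ereal s \<le> T \<omega>"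
      using idx_unique[OF s(1), of i n] by auto
    then show "ennreal (kk b1 b2 f n i) * (ennreal ((\<alpha> s \<omega>)\<^sup>2) * indicator {u. real i / 2^n < u \<and> u \<le> real (Suc i) / 2^n \<and> ereal u \<le> T \<omega>} s) =
      (if i = idx n s then ennreal (kk b1 b2 f n i) * (ennreal ((\<alpha> s \<omega>)\<^sup>2) * indicator {u. ereal u \<le> T \<omega>} s) else 0)"
      by (auto simp: indicator_def)
  qed
  also have "\<dots> = ennreal (kk b1 b2 f n (idx n s)) * (ennreal ((\<alpha> s \<omega>)\<^sup>2) * indicator {u. ereal u \<le> T \<omega>} s)"
    using idx_props(4)[OF s(1) s(2)] by (subst sum.delta) auto
  finally show ?thesis .
qed

lemma HH_zero:
  assumes s: "s \<le> 0 \<or> real n < s"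
  shows "HH b1 b2 \<alpha> T \<omega> f n s = 0"
  unfolding HH_def
proof (intro sum.neutral ballI)
  fix i assume i: "i \<in> {..<n * 2^n}"
  have "s \<notin> {u. real i / 2^n < u \<and> u \<le> real (Suc i) / 2^n \<and> ereal u \<le> T \<omega>}"
  proof
    assume "s \<in> {u. real i / 2^n < u \<and> u \<le> real (Suc i) / 2^n \<and> ereal u \<le> T \<omega>}"
    then have si: "real i / 2^n < s" "s \<le> real (Suc i) / 2^n" by auto
    have "0 \<le> real i / 2^n" by simp
    moreover have "real (Suc i) / 2^n \<le> real n"
    proof -
      have "Suc i \<le> n * 2^n" using i by simp
      then have "real (Suc i) \<le> real n * 2^n" by (metis of_nat_le_iff of_nat_mult of_nat_numeral of_nat_power)
      then show ?thesis by (simp add: divide_le_eq)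
    qed
    ultimately show False using s si by linarith
  qed
  then show "ennreal (kk b1 b2 f n i) * (ennreal ((\<alpha> s \<omega>)\<^sup>2) * indicator {u. real i / 2^n < u \<and> u \<le> real (Suc i) / 2^n \<and> ereal u \<le> T \<omega>} s) = 0"
    by simp
qed

lemma HH_inc:
  fixes f :: "real \<Rightarrow> real"
  assumes mono: "mono_on {0..} f" and b1: "0 \<le> b1" and b12: "b1 \<le> b2"
  shows "incseq (\<lambda>n. HH b1 b2 \<alpha> T \<omega> f n)"
proof (rule incseq_SucI, rule le_funI)
  fix n s
  have b2: "0 \<le> b2" using b1 b12 by simp
  show "HH b1 b2 \<alpha> T \<omega> f n s \<le> HH b1 b2 \<alpha> T \<omega> f (Suc n) s"
  proof (cases "0 < s \<and> s \<le> real n")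
    case False
    then have "HH b1 b2 \<alpha> T \<omega> f n s = 0" by (intro HH_zero) auto
    then show ?thesis by simp
  next
    case True
    then have s: "0 < s" "s \<le> real n" "s \<le> real (Suc n)" by auto
    have k: "kk b1 b2 f n (idx n s) \<le> kk b1 b2 f (Suc n) (idx (Suc n) s)"
    proof -
      note im = idx_mono[OF s(1), of n]
      have l0: "0 \<le> real (idx n s) / 2^n" by simp
      have h0: "0 \<le> real (Suc (idx (Suc n) s)) / 2^(Suc n)" by simp
      have "EE b1 f (real (idx n s) / 2^n) \<le> EE b1 f (real (idx (Suc n) s) / 2^(Suc n))"
        by (rule EE_mono[OF mono b1 l0 im(1)])
      moreover have "EE b2 f (real (Suc (idx (Suc n) s)) / 2^(Suc n)) \<le> EE b2 f (real (Suc (idx n s)) / 2^n)"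
        by (rule EE_mono[OF mono b2 h0 im(2)])
      moreover have "0 < EE b2 f (real (Suc (idx (Suc n) s)) / 2^(Suc n))" by (rule EE_pos[OF mono b2 h0])
      moreover have "0 \<le> EE b1 f (real (idx n s) / 2^n)" using EE_pos[OF mono b1 l0] by simp
      ultimately show ?thesis unfolding kk_def by (intro frac_le) auto
    qed
    show ?thesis unfolding HH_val[OF s(1,2)] HH_val[OF s(1,3)]
      using k by (intro mult_right_mono ennreal_leI) auto
  qed
qed


lemma xi_bound:
  fixes p :: "real \<Rightarrow> ennreal" and E :: "real \<Rightarrow> real"
  assumes mono: "\<And>u v. t0 \<le> u \<Longrightarrow> u \<le> v \<Longrightarrow> E u \<le> E v" and t0: "0 \<le> t0"
  shows "ennreal (E t0) * (SUP u\<in>{t0..}. p u)\<^sup>2 \<le> (SUP s\<in>{0..}. ennreal (E s) * (p s)\<^sup>2)"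
proof -
  let ?Y = "SUP u\<in>{t0..}. p u"
  let ?S = "SUP s\<in>{0..}. ennreal (E s) * (p s)\<^sup>2"
  have pair: "ennreal (E t0) * (p u * p v) \<le> ?S" if uv: "t0 \<le> u" "t0 \<le> v" for u v
  proof -
    have key: "ennreal (E t0) * (p u * p v) \<le> ennreal (E w) * (p w)\<^sup>2"
      if w: "w \<in> {u, v}" "p u \<le> p w" "p v \<le> p w" for w
    proof -
      have "t0 \<le> w" using w uv by auto
      then have "ennreal (E t0) \<le> ennreal (E w)" using mono by (intro ennreal_leI) auto
      moreover have "p u * p v \<le> (p w)\<^sup>2" unfolding power2_eq_square using w by (intro mult_mono) auto
      ultimately show ?thesis by (intro mult_mono) auto
    qed
    have "ennreal (E t0) * (p u * p v) \<le> ennreal (E u) * (p u)\<^sup>2 \<or> ennreal (E t0) * (p u * p v) \<le> ennreal (E v) * (p v)\<^sup>2"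
    proof (cases "p u \<le> p v")
      case True then show ?thesis using key[of v] by auto
    next
      case False then show ?thesis using key[of u] by auto
    qed
    moreover have "ennreal (E u) * (p u)\<^sup>2 \<le> ?S" "ennreal (E v) * (p v)\<^sup>2 \<le> ?S"
      using uv t0 by (auto intro!: SUP_upper)
    ultimately show ?thesis by (auto intro: order_trans)
  qed
  have "?Y\<^sup>2 = (SUP u\<in>{t0..}. SUP v\<in>{t0..}. p u * p v)"
  proof -
    have "?Y\<^sup>2 = ?Y * ?Y" by (simp add: power2_eq_square)
    also have "\<dots> = (SUP u\<in>{t0..}. ?Y * p u)" by (rule SUP_mult_left_ennreal)
    also have "\<dots> = (SUP u\<in>{t0..}. SUP v\<in>{t0..}. p u * p v)"
      by (intro SUP_cong refl) (simp add: SUP_mult_left_ennreal mult.commute)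
    finally show ?thesis .
  qed
  then have "ennreal (E t0) * ?Y\<^sup>2 = (SUP u\<in>{t0..}. SUP v\<in>{t0..}. ennreal (E t0) * (p u * p v))"
    by (simp add: SUP_mult_left_ennreal)
  also have "\<dots> \<le> ?S" using pair by (intro SUP_least) auto
  finally show ?thesis .
qed

lemma eps_lemma:
  fixes x W :: ennreal and c :: real
  assumes c: "0 \<le> c" and h: "\<And>\<epsilon>. 0 < \<epsilon> \<Longrightarrow> x \<le> ennreal (c * exp \<epsilon>) * W"
  shows "x \<le> ennreal c * W"
proof (cases "W = \<infinity> \<or> c = 0")
  case True
  then show ?thesis
  proof
    assume "c = 0" then show ?thesis using h[of 1] by simp
  next
    assume W: "W = \<infinity>"
    show ?thesis
    proof (cases "c = 0")
      case True then show ?thesis using h[of 1] by simp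
    next
      case False then show ?thesis using W c by (simp add: ennreal_mult_top)
    qed
  qed
next
  case False
  then obtain w where w: "W = ennreal w" "0 \<le> w" by (cases W) auto
  have "x \<le> ennreal (c * exp 1 * w)" using h[of 1] w c by (simp add: ennreal_mult)
  then obtain y where y: "x = ennreal y" "0 \<le> y" by (cases x) (auto simp: top_unique)
  have "y \<le> c * exp \<epsilon> * w" if "0 < \<epsilon>" for \<epsilon>
  proof -
    have "ennreal y \<le> ennreal (c * exp \<epsilon> * w)" using h[OF that] y w c by (simp add: ennreal_mult)
    moreover have "0 \<le> c * exp \<epsilon> * w" using c w by simp
    ultimately show ?thesis by (auto simp: ennreal_le_iff2)
  qed
  then have "y \<le> c * exp 0 * w"
  proof -
    assume H: "\<And>\<epsilon>. 0 < \<epsilon> \<Longrightarrow> y \<le> c * exp \<epsilon> * w"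
    have "((\<lambda>\<epsilon>. c * exp \<epsilon> * w) \<longlongrightarrow> c * exp 0 * w) (at_right 0)"
      by (intro tendsto_intros)
    moreover have "\<forall>\<^sub>F \<epsilon> in at_right 0. y \<le> c * exp \<epsilon> * w"
      using H by (auto simp: eventually_at_right_less intro: eventually_mono[OF eventually_at_right_less])
    ultimately show ?thesis by (rule tendsto_lowerbound) simp
  qed
  then have "ennreal y \<le> ennreal (c * w)" by (intro ennreal_leI) simp
  then show ?thesis using y w c by (simp add: ennreal_mult)
qed



lemma pointwise:
  fixes f :: "real \<Rightarrow> real"
  assumes mono: "mono_on {0..} f"
    and rc: "\<And>t \<eta>. 0 \<le> t \<Longrightarrow> 0 < \<eta> \<Longrightarrow> \<exists>h>0. \<forall>v. t \<le> v \<and> v \<le> t + h \<longrightarrow> f v - f t < \<eta>"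
    and jb: "\<And>t. 0 \<le> t \<Longrightarrow> jmp f t \<le> \<Phi>"
    and ann: "\<And>t. 0 \<le> t \<Longrightarrow> 0 \<le> \<alpha> t \<omega>"
    and \<Phi>: "0 \<le> \<Phi>" and b1: "0 \<le> b1" and b12: "b1 < b2"
  shows "ennreal (EE b1 f s) * (ennreal (\<alpha> s \<omega>) * xi_star \<xi> T s \<omega>)\<^sup>2 * indicator {s. 0 < s \<and> ereal s \<le> T \<omega>} s
     \<le> ennreal ((1 + b2 * \<Phi>) * (1 + b1 * \<Phi>)) * (SUP u\<in>{0..}. ennreal (EE b2 f u) * (xi_pos_before \<xi> T u \<omega>)\<^sup>2)
        * (SUP n. HH b1 b2 \<alpha> T \<omega> f n s)"
proof (cases "0 < s \<and> ereal s \<le> T \<omega>")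
  case False
  then show ?thesis by simp
next
  case True
  then have s: "0 < s" and sT: "ereal s \<le> T \<omega>" by auto
  have b2: "0 \<le> b2" using b1 b12 by simp
  define c where "c = (1 + b2 * \<Phi>) * (1 + b1 * \<Phi>)"
  have c0: "0 \<le> c" unfolding c_def using b1 b2 \<Phi> by simp
  define S where "S = (SUP u\<in>{0..}. ennreal (EE b2 f u) * (xi_pos_before \<xi> T u \<omega>)\<^sup>2)"
  define Z where "Z = (SUP n. HH b1 b2 \<alpha> T \<omega> f n s)"
  define g where "g = \<alpha> s \<omega>"
  have g0: "0 \<le> g" unfolding g_def using ann s by simp
  define X where "X = xi_star \<xi> T s \<omega>"
  have lhs: "ennreal (EE b1 f s) * (ennreal (\<alpha> s \<omega>) * xi_star \<xi> T s \<omega>)\<^sup>2 * indicator {s. 0 < s \<and> ereal s \<le> T \<omega>} s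
      = ennreal (EE b1 f s) * ennreal (g\<^sup>2) * X\<^sup>2"
    using True g0 unfolding g_def X_def by (simp add: power_mult_distrib ennreal_power mult.assoc)
  have main: "ennreal (EE b1 f s) * ennreal (g\<^sup>2) * X\<^sup>2 \<le> ennreal (c * exp \<epsilon>) * (S * Z)" if e: "0 < \<epsilon>" for \<epsilon>
  proof -
    define \<eta> where "\<eta> = \<epsilon> / (3 * b2 + 1)"
    have \<eta>0: "0 < \<eta>" unfolding \<eta>_def using e b2 by simp
    have \<eta>e: "3 * b2 * \<eta> \<le> \<epsilon>"
    proof -
      have "3 * b2 * \<eta> = \<epsilon> * (3 * b2 / (3 * b2 + 1))" unfolding \<eta>_def using b2 by (simp add: field_simps)
      also have "\<dots> \<le> \<epsilon> * 1" using e b2 by (intro mult_left_mono) auto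
      finally show ?thesis by simp
    qed
    define L where "L = (SUP u\<in>{0..<s}. f u)"
    have L: "L = f s - jmp f s" unfolding L_def jmp_def using s by simp
    have "L - \<eta> < L" using \<eta>0 by simp
    then obtain u0 where u0: "u0 \<in> {0..<s}" "L - \<eta> < f u0"
      unfolding L_def using jmp_sup_le(1)[OF mono s] s by (subst (asm) less_cSUP_iff) auto
    obtain h where h: "h > 0" "\<And>v. s \<le> v \<and> v \<le> s + h \<Longrightarrow> f v - f s < \<eta>"
      using rc[of s \<eta>] s \<eta>0 by auto
    have mpos: "0 < min h (s - u0)" using h u0 by auto
    obtain N1 where N1: "(1/2::real)^N1 < min h (s - u0)"
      using real_arch_pow_inv[OF mpos, of "1/2"] by auto
    define n where "n = max N1 (nat \<lceil>s\<rceil>)"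
    have sn: "s \<le> real n"
    proof -
      have "s \<le> real (nat \<lceil>s\<rceil>)" by linarith
      also have "\<dots> \<le> real n" unfolding n_def by simp
      finally show ?thesis .
    qed
    have pn: "(1/2::real)^n \<le> (1/2)^N1" unfolding n_def by (intro power_decreasing) auto
    define i where "i = idx n s"
    define t0 where "t0 = real i / 2^n"
    define t1 where "t1 = real (Suc i) / 2^n"
    have t0s: "t0 < s" and st1: "s \<le> t1" unfolding t0_def t1_def i_def using idx_props[OF s] by auto
    have t00: "0 \<le> t0" unfolding t0_def by simp
    have t1t0: "t1 = t0 + (1/2)^n" unfolding t0_def t1_def by (simp add: field_simps power_one_over)
    have N1': "(1/2::real)^N1 < h" "(1/2::real)^N1 < s - u0" using N1 by auto
    have t0u0: "u0 < t0" using t1t0 st1 pn N1' by linarith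
    have ft0: "L - \<eta> < f t0" using u0 mono_onD[OF mono, of u0 t0] t0u0 by auto
    have "t1 \<le> s + h" using t1t0 t0s pn N1' by linarith
    then have ft1: "f t1 - f s < \<eta>" using h(2)[of t1] st1 by auto
    define \<Delta> where "\<Delta> = jmp f s"
    have \<Delta>: "0 \<le> \<Delta>" "\<Delta> \<le> \<Phi>" unfolding \<Delta>_def using jmp_nonneg[OF mono] jb s by auto
    define d1 where "d1 = f s - f t0 - \<Delta>"
    define d2 where "d2 = f t1 - f t0 - \<Delta>"
    have d1: "d1 \<le> \<eta>" unfolding d1_def \<Delta>_def using ft0 L by simp
    have d2: "d2 \<le> 2 * \<eta>" unfolding d2_def \<Delta>_def using ft0 ft1 L by simp
    have dsum: "b1 * d1 + b2 * d2 \<le> \<epsilon>"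
    proof -
      have "b1 * d1 \<le> b1 * \<eta>" using d1 b1 by (intro mult_left_mono)
      also have "\<dots> \<le> b2 * \<eta>" using b12 \<eta>0 by (intro mult_right_mono) auto
      finally have x1: "b1 * d1 \<le> b2 * \<eta>" .
      have x2: "b2 * d2 \<le> b2 * (2 * \<eta>)" using d2 b2 by (intro mult_left_mono)
      show ?thesis using x1 x2 \<eta>e by (simp add: algebra_simps)
    qed
    define R1 where "R1 = RR b1 f t0 s"
    define R2 where "R2 = RR b2 f t0 t1"
    have t0t1: "t0 \<le> t1" using t0s st1 by simp
    have R1: "R1 \<le> exp (b1 * d1) * (1 + b1 * \<Delta>)" "1 \<le> R1"
      unfolding R1_def d1_def \<Delta>_def
      by (rule RR_jump[OF mono b1 t00 t0s order_refl], rule RR_ge1[OF mono b1 t00 less_imp_le[OF t0s]])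
    have R2: "R2 \<le> exp (b2 * d2) * (1 + b2 * \<Delta>)" "1 \<le> R2"
      unfolding R2_def d2_def \<Delta>_def
      by (rule RR_jump[OF mono b2 t00 t0s st1], rule RR_ge1[OF mono b2 t00 t0t1])
    have Es: "EE b1 f s = EE b1 f t0 * R1" unfolding R1_def by (rule EE_split[OF mono b1 t00 less_imp_le[OF t0s]])
    have Et1: "EE b2 f t1 = EE b2 f t0 * R2" unfolding R2_def by (rule EE_split[OF mono b2 t00 t0t1])
    have P: "0 < EE b1 f t0" and Q: "0 < EE b2 f t0" using EE_pos[OF mono b1 t00] EE_pos[OF mono b2 t00] by auto
    have RR12: "R1 * R2 \<le> c * exp \<epsilon>"
    proof -
      have "R1 * R2 \<le> (exp (b1 * d1) * (1 + b1 * \<Delta>)) * (exp (b2 * d2) * (1 + b2 * \<Delta>))"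
        using R1 R2 by (intro mult_mono) auto
      also have "\<dots> = exp (b1 * d1 + b2 * d2) * ((1 + b2 * \<Delta>) * (1 + b1 * \<Delta>))"
        by (simp add: exp_add algebra_simps)
      also have "\<dots> \<le> exp \<epsilon> * c"
      proof (rule mult_mono)
        show "exp (b1 * d1 + b2 * d2) \<le> exp \<epsilon>" using dsum by simp
        show "(1 + b2 * \<Delta>) * (1 + b1 * \<Delta>) \<le> c" unfolding c_def
          using \<Delta> b1 b2 by (intro mult_mono add_left_mono mult_left_mono) auto
      qed (use \<Delta> b1 b2 in auto)
      finally show ?thesis by (simp add: mult.commute)
    qed
    define k where "k = EE b1 f t0 / EE b2 f t1"
    have k0: "0 \<le> k" unfolding k_def Et1 using P Q R2 by simp
    have real_ineq: "EE b1 f s \<le> c * exp \<epsilon> * k * EE b2 f t0"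
    proof -
      have "EE b1 f s = EE b1 f t0 * R1" by (rule Es)
      also have "\<dots> = (EE b1 f t0 / R2) * (R1 * R2)" using R2 by (simp add: field_simps)
      also have "\<dots> \<le> (EE b1 f t0 / R2) * (c * exp \<epsilon>)" using RR12 P R2 by (intro mult_left_mono) auto
      also have "\<dots> = c * exp \<epsilon> * k * EE b2 f t0" unfolding k_def Et1 using Q R2 by (simp add: field_simps)
      finally show ?thesis .
    qed
    have XY: "X \<le> (SUP u\<in>{t0..}. xi_pos_before \<xi> T u \<omega>)"
      unfolding X_def xi_star_def using s t00 t0s by (auto intro!: INF_lower2[of t0])
    have XS: "ennreal (EE b2 f t0) * X\<^sup>2 \<le> S"
    proof -
      have "ennreal (EE b2 f t0) * X\<^sup>2 \<le> ennreal (EE b2 f t0) * (SUP u\<in>{t0..}. xi_pos_before \<xi> T u \<omega>)\<^sup>2"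
        using XY by (intro mult_left_mono power_mono) auto
      also have "\<dots> \<le> S" unfolding S_def
        by (rule xi_bound[OF _ t00]) (rule EE_mono[OF mono b2], use t00 in auto)
      finally show ?thesis .
    qed
    have HHv: "HH b1 b2 \<alpha> T \<omega> f n s = ennreal k * ennreal (g\<^sup>2)"
      using HH_val[OF s sn, of b1 b2 \<alpha> T \<omega> f] sT unfolding k_def kk_def g_def i_def[symmetric] t0_def[symmetric] t1_def[symmetric]
      by simp
    have "ennreal (EE b1 f s) * ennreal (g\<^sup>2) * X\<^sup>2 \<le> ennreal (c * exp \<epsilon> * k * EE b2 f t0) * ennreal (g\<^sup>2) * X\<^sup>2"
      using real_ineq by (intro mult_right_mono ennreal_leI) auto
    also have "\<dots> = ennreal (c * exp \<epsilon>) * (ennreal k * ennreal (g\<^sup>2)) * (ennreal (EE b2 f t0) * X\<^sup>2)"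
      using c0 k0 Q by (simp add: ennreal_mult mult_ac)
    also have "\<dots> \<le> ennreal (c * exp \<epsilon>) * (ennreal k * ennreal (g\<^sup>2)) * S"
      using XS by (intro mult_left_mono) auto
    also have "\<dots> = ennreal (c * exp \<epsilon>) * (S * HH b1 b2 \<alpha> T \<omega> f n s)" unfolding HHv by (simp add: mult_ac)
    also have "\<dots> \<le> ennreal (c * exp \<epsilon>) * (S * Z)" unfolding Z_def
      by (intro mult_left_mono SUP_upper) auto
    finally show ?thesis .
  qed
  have "ennreal (EE b1 f s) * ennreal (g\<^sup>2) * X\<^sup>2 \<le> ennreal c * (S * Z)"
    by (rule eps_lemma[OF c0 main])
  then show ?thesis unfolding lhs c_def[symmetric] S_def[symmetric] Z_def[symmetric] by (simp add: mult.assoc)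
qed


lemma nn_integral_cmult_le:
  fixes c :: ennreal
  assumes c: "c < \<infinity>"
  shows "(\<integral>\<^sup>+ x. c * f x \<partial>M) \<le> c * integral\<^sup>N M f"
proof (cases "c = 0")
  case True then show ?thesis by simp
next
  case False
  show ?thesis
    unfolding nn_integral_def[of M "\<lambda>x. c * f x"]
  proof (rule SUP_least)
    fix g assume g: "g \<in> {g. simple_function M g \<and> g \<le> (\<lambda>x. c * f x)}"
    define g' where "g' x = g x / c" for x
    have sg': "simple_function M g'" unfolding g'_def using g by (auto intro: simple_function_compose1)
    have gg: "g x = c * g' x" for x
      unfolding g'_def ennreal_times_divide using ennreal_mult_divide_eq[of c "g x"] False c by (simp add: mult.commute)
    have cpos: "0 < c" using False by (metis not_gr_zero)
    have le: "g' x \<le> f x" for x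
      unfolding g'_def by (rule divide_le_posI_ennreal[OF cpos]) (use g in \<open>auto simp: le_fun_def\<close>)
    have geq: "g = (\<lambda>x. c * g' x)" using gg by (rule ext)
    have "integral\<^sup>S M g = c * integral\<^sup>S M g'"
      unfolding geq by (rule simple_integral_mult[OF sg'])
    also have "\<dots> = c * integral\<^sup>N M g'" using nn_integral_eq_simple_integral[OF sg'] by simp
    also have "\<dots> \<le> c * integral\<^sup>N M f" using le by (intro mult_left_mono nn_integral_mono) auto
    finally show "integral\<^sup>S M g \<le> c * integral\<^sup>N M f" .
  qed
qed

lemma omega_bound:
  assumes m: "(\<lambda>s. \<alpha> s \<omega>) \<in> borel_measurable (restrict_space borel {0..})"
    and fin: "\<forall>t\<ge>0. A_enn C \<alpha> T t \<omega> < \<infinity>"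
    and jb: "\<forall>t\<ge>0. jump (A_proc C \<alpha> T) t \<omega> \<le> \<Phi>"
    and ann: "\<And>t. 0 \<le> t \<Longrightarrow> 0 \<le> \<alpha> t \<omega>"
    and \<Phi>: "0 \<le> \<Phi>" and b1: "0 \<le> b1" and b12: "b1 < b2"
  shows "(\<integral>\<^sup>+ s. ennreal (stoch_exp b1 (A_proc C \<alpha> T) s \<omega>) * (ennreal (\<alpha> s \<omega>) * xi_star \<xi> T s \<omega>)\<^sup>2
            * indicator {s. 0 < s \<and> ereal s \<le> T \<omega>} s \<partial>dC C \<omega>)
     \<le> ennreal ((1 + b2 * \<Phi>) * (1 + b1 * \<Phi>) / (b2 - b1))
       * (SUP s\<in>{0..}. ennreal (stoch_exp b2 (A_proc C \<alpha> T) s \<omega>) * (xi_pos_before \<xi> T s \<omega>)\<^sup>2)"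
proof -
  let ?f = "\<lambda>t. A_proc C \<alpha> T t \<omega>"
  note AF = A_facts[where \<alpha>=\<alpha> and \<omega>=\<omega>, OF m fin]
  have rc: "\<exists>h>0. \<forall>v. t \<le> v \<and> v \<le> t + h \<longrightarrow> ?f v - ?f t < \<eta>" if "0 \<le> t" "0 < \<eta>" for t \<eta>
    by (rule A_rcont[where \<alpha>=\<alpha> and \<omega>=\<omega>, OF m fin that])
  have jb': "jmp ?f t \<le> \<Phi>" if "0 \<le> t" for t using jb that by (simp add: jump_jmp)
  define c where "c = (1 + b2 * \<Phi>) * (1 + b1 * \<Phi>)"
  have c0: "0 \<le> c" unfolding c_def using b1 b12 \<Phi> by simp
  define S where "S = (SUP u\<in>{0..}. ennreal (EE b2 ?f u) * (xi_pos_before \<xi> T u \<omega>)\<^sup>2)"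
  have hm: "HH b1 b2 \<alpha> T \<omega> ?f n \<in> borel_measurable (dC C \<omega>)" for n by (rule HH_meas[where \<alpha>=\<alpha> and \<omega>=\<omega>, OF m])
  let ?L = "(\<integral>\<^sup>+ s. ennreal (stoch_exp b1 (A_proc C \<alpha> T) s \<omega>) * (ennreal (\<alpha> s \<omega>) * xi_star \<xi> T s \<omega>)\<^sup>2
            * indicator {s. 0 < s \<and> ereal s \<le> T \<omega>} s \<partial>dC C \<omega>)"
  have "?L \<le> (\<integral>\<^sup>+ s. ennreal c * S * (SUP n. HH b1 b2 \<alpha> T \<omega> ?f n s) \<partial>dC C \<omega>)"
    unfolding stoch_exp_EE c_def S_def
    by (intro nn_integral_mono pointwise[where \<alpha>=\<alpha> and \<omega>=\<omega>, OF AF(1) rc jb' ann \<Phi> b1 b12]) auto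
  also have "\<dots> = ennreal c * S * (\<integral>\<^sup>+ s. (SUP n. HH b1 b2 \<alpha> T \<omega> ?f n s) \<partial>dC C \<omega>)"
    by (rule nn_integral_cmult) (use hm in measurable)
  finally have I1: "?L \<le> ennreal c * S * (\<integral>\<^sup>+ s. (SUP n. HH b1 b2 \<alpha> T \<omega> ?f n s) \<partial>dC C \<omega>)" .
  have "(\<integral>\<^sup>+ s. (SUP n. HH b1 b2 \<alpha> T \<omega> ?f n s) \<partial>dC C \<omega>) = (SUP n. integral\<^sup>N (dC C \<omega>) (HH b1 b2 \<alpha> T \<omega> ?f n))"
    by (rule nn_integral_monotone_convergence_SUP[OF HH_inc[OF AF(1) b1 less_imp_le[OF b12]] hm])
  also have "\<dots> \<le> ennreal (1 / (b2 - b1))"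
    by (rule SUP_least) (rule HH_int[where \<alpha>=\<alpha> and \<omega>=\<omega>, OF m fin b1 b12])
  finally have I2: "(\<integral>\<^sup>+ s. (SUP n. HH b1 b2 \<alpha> T \<omega> ?f n s) \<partial>dC C \<omega>) \<le> ennreal (1 / (b2 - b1))" .
  have "?L \<le> ennreal c * S * ennreal (1 / (b2 - b1))"
    using I1 I2 by (meson mult_left_mono order_trans zero_le)
  also have "\<dots> = ennreal (c / (b2 - b1)) * S"
    using c0 b12 by (simp add: ennreal_mult[symmetric] mult_ac)
  finally show ?thesis unfolding c_def S_def stoch_exp_EE .
qed

theorem mainTheorem12:
  fixes M :: "'a measure" and G :: "real \<Rightarrow> 'a measure"
    and T :: "'a \<Rightarrow> ereal" and C \<alpha> :: "real \<Rightarrow> 'a \<Rightarrow> real"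
    and \<xi> :: "real \<Rightarrow> 'a \<Rightarrow> ereal" and \<Phi> \<beta>hat \<beta>star :: real
  assumes "prob_space M"
    and "filtration_on M G" and "right_continuous_filtration G"
    and "universal_completion_sets (G_infty M G) \<subseteq> sets M"
    and "stopping_time_on M G T"
    and "predictable M G C"
    and "AE \<omega> in M. mono_on {0..} (\<lambda>t. C t \<omega>) \<and> (\<forall>t\<ge>0. continuous (at_right t) (\<lambda>s. C s \<omega>))"
    and "\<forall>\<omega>\<in>space M. C 0 \<omega> = 0"
    and "predictable M G \<alpha>"
    and "\<forall>t\<ge>0. \<forall>\<omega>\<in>space M. 0 \<le> \<alpha> t \<omega>"
    and "AE \<omega> in M. AE t in dC C \<omega>. 0 \<le> t \<and> ereal t \<le> T \<omega> \<longrightarrow> 0 < \<alpha> t \<omega>"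
    and "AE \<omega> in M. \<forall>t\<ge>0. A_enn C \<alpha> T t \<omega> < \<infinity>"
    and "0 \<le> \<Phi>"
    and "AE \<omega> in M. \<forall>t\<ge>0. jump (A_proc C \<alpha> T) t \<omega> \<le> \<Phi>"
    and "optional_ereal M G \<xi>"
    and "\<forall>t\<ge>0. \<forall>\<omega>\<in>space M. \<xi> t \<omega> \<noteq> \<infinity>"
    and "0 \<le> \<beta>hat" and "\<beta>hat < \<beta>star"
  shows "H2_norm_sq M C T (A_proc C \<alpha> T) \<beta>hat (\<lambda>s \<omega>. ennreal (\<alpha> s \<omega>) * xi_star \<xi> T s \<omega>)
         \<le> ennreal ((1 + \<beta>star * \<Phi>) * (1 + \<beta>hat * \<Phi>) / (\<beta>star - \<beta>hat))
           * (\<integral>\<^sup>+ \<omega>. (SUP s\<in>{0..}. ennreal (stoch_exp \<beta>star (A_proc C \<alpha> T) s \<omega>)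
                         * (xi_pos_before \<xi> T s \<omega>)\<^sup>2) \<partial>M)
     \<and> ((\<integral>\<^sup>+ \<omega>. (SUP s\<in>{0..}. ennreal (stoch_exp \<beta>star (A_proc C \<alpha> T) s \<omega>)
                         * (xi_pos_before \<xi> T s \<omega>)\<^sup>2) \<partial>M) < \<infinity>
        \<longrightarrow> H2_norm_sq M C T (A_proc C \<alpha> T) \<beta>hat (\<lambda>s \<omega>. ennreal (\<alpha> s \<omega>) * xi_star \<xi> T s \<omega>) < \<infinity>)"
proof -
  define K where "K = (1 + \<beta>star * \<Phi>) * (1 + \<beta>hat * \<Phi>) / (\<beta>star - \<beta>hat)"
  define S where "S \<omega> = (SUP s\<in>{0..}. ennreal (stoch_exp \<beta>star (A_proc C \<alpha> T) s \<omega>)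
                         * (xi_pos_before \<xi> T s \<omega>)\<^sup>2)" for \<omega>
  define I where "I \<omega> = (\<integral>\<^sup>+ s. ennreal (stoch_exp \<beta>hat (A_proc C \<alpha> T) s \<omega>) * (ennreal (\<alpha> s \<omega>) * xi_star \<xi> T s \<omega>)\<^sup>2
            * indicator {s. 0 < s \<and> ereal s \<le> T \<omega>} s \<partial>dC C \<omega>)" for \<omega>
  have AEb: "AE \<omega> in M. I \<omega> \<le> ennreal K * S \<omega>"
    using assms(12) assms(14) AE_space
  proof eventually_elim
    case (elim \<omega>)
    have ann: "0 \<le> \<alpha> t \<omega>" if "0 \<le> t" for t using assms(10) elim(3) that by auto
    show ?case unfolding I_def K_def S_def
      by (rule omega_bound[OF section_measurable[OF assms(9) assms(2) elim(3)] elim(1) elim(2) ann assms(13) assms(17) assms(18)])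
  qed
  have le: "H2_norm_sq M C T (A_proc C \<alpha> T) \<beta>hat (\<lambda>s \<omega>. ennreal (\<alpha> s \<omega>) * xi_star \<xi> T s \<omega>)
      \<le> ennreal K * (\<integral>\<^sup>+ \<omega>. S \<omega> \<partial>M)"
  proof -
    have "H2_norm_sq M C T (A_proc C \<alpha> T) \<beta>hat (\<lambda>s \<omega>. ennreal (\<alpha> s \<omega>) * xi_star \<xi> T s \<omega>)
        = (\<integral>\<^sup>+ \<omega>. I \<omega> \<partial>M)" unfolding H2_norm_sq_def I_def by simp
    also have "\<dots> \<le> (\<integral>\<^sup>+ \<omega>. ennreal K * S \<omega> \<partial>M)" by (rule nn_integral_mono_AE[OF AEb])
    also have "\<dots> \<le> ennreal K * (\<integral>\<^sup>+ \<omega>. S \<omega> \<partial>M)" by (rule nn_integral_cmult_le) simp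
    finally show ?thesis .
  qed
  show ?thesis
  proof
    show "H2_norm_sq M C T (A_proc C \<alpha> T) \<beta>hat (\<lambda>s \<omega>. ennreal (\<alpha> s \<omega>) * xi_star \<xi> T s \<omega>)
         \<le> ennreal ((1 + \<beta>star * \<Phi>) * (1 + \<beta>hat * \<Phi>) / (\<beta>star - \<beta>hat))
           * (\<integral>\<^sup>+ \<omega>. (SUP s\<in>{0..}. ennreal (stoch_exp \<beta>star (A_proc C \<alpha> T) s \<omega>)
                         * (xi_pos_before \<xi> T s \<omega>)\<^sup>2) \<partial>M)"
      using le unfolding K_def S_def .
    show "(\<integral>\<^sup>+ \<omega>. (SUP s\<in>{0..}. ennreal (stoch_exp \<beta>star (A_proc C \<alpha> T) s \<omega>)
                         * (xi_pos_before \<xi> T s \<omega>)\<^sup>2) \<partial>M) < \<infinity>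
        \<longrightarrow> H2_norm_sq M C T (A_proc C \<alpha> T) \<beta>hat (\<lambda>s \<omega>. ennreal (\<alpha> s \<omega>) * xi_star \<xi> T s \<omega>) < \<infinity>"
    proof
      assume fin: "(\<integral>\<^sup>+ \<omega>. (SUP s\<in>{0..}. ennreal (stoch_exp \<beta>star (A_proc C \<alpha> T) s \<omega>)
                         * (xi_pos_before \<xi> T s \<omega>)\<^sup>2) \<partial>M) < \<infinity>"
      have "ennreal K * (\<integral>\<^sup>+ \<omega>. S \<omega> \<partial>M) < \<infinity>"
        using fin unfolding S_def by (simp add: ennreal_mult_less_top)
      then show "H2_norm_sq M C T (A_proc C \<alpha> T) \<beta>hat (\<lambda>s \<omega>. ennreal (\<alpha> s \<omega>) * xi_star \<xi> T s \<omega>) < \<infinity>"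
        using le by (rule le_less_trans[rotated])
    qed
  qed
qed

end
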